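(* Let $G$ be a $6$-regular graph, $\mathcal S$ a canonical path partition of $G$, and $P$ a path component of $\mathcal S$ with end-vertices $o_1,o_2$. Suppose $x_1,v_3$ are path neighbors on $P$ with $x_1$ heavy, $v_3$ dangerous, and $x_1$ immediately preceding $v_3$ when $P$ is traversed from $o_1$ to $o_2$; let $y_1$ be the other path neighbor of $v_3$ (so $y_1$ immediately follows $v_3$). Let $uv_3$ be a free edge such that $u$ has a path neighbor in $V_2$. Then: (1) $u$ lies on $P$; (2) $u$ lies on $P$ after $y_1$ (in the order from $o_1$ to $o_2$), $u$ has exactly one path neighbor in $V_2$, call it $x_2$, and $x_2$ immediately follows $u$ on $P$ (so $P=o_1\cdots x_1v_3y_1\cdots u x_2\cdots o_2$); (3) $x_2$ is incident to exactly one balanced edge, namely the edge $x_2o_2$; (4) among the balanced edges incident to $y_1$, exactly one has as its other endpoint an end-vertex of a path component, and that endpoint is $o_2$ (all other balanced edges of $y_1$ go to vertices of cycle components). (By reversing $P$, the symmetric statement holds when $v_3$ immediately precedes $x_1$.)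
   Context: All graphs are finite, simple and undirected. A path partition of $G=(V,E)$ is a set of vertex-disjoint paths (single vertices allowed) covering $V$; its members are components. A component with $t\ge3$ vertices is a cycle component if the subgraph induced on its vertex set has a spanning cycle; a one-vertex component is an isolated vertex; every other component is a path component. A path partition is canonical if (1) it has the minimum number of components among all path partitions of $G$; (2) among those, it has the maximum number of cycle components; (3) it has no isolated vertices. Given a canonical path partition $\mathcal S$ of $G$: two vertices are path neighbors if they are consecutive on a path component. An edge of $G$ is a free edge unless it joins two path neighbors or has both endpoints in the same cycle component. $V_1$ is the set of end-vertices of path components together with all vertices of cycle components. The remaining vertices are classified by the first applicable rule: $V_2$: joined by a free edge to a vertex of $V_1$; $V_3$: both path neighbors lie in $V_2$; $V_4$: exactly one path neighbor lies in $V_2$; $V_5$: all others. A balanced edge is a free edge with one endpoint in $V_1$ and the other in $V_2$; for $x\in V_2$, $y\in V_1$ we say $x$ goes to $y$ if $xy$ is a balanced edge. A vertex of $V_2$ is moderate if it is incident to at least two balanced edges, at least one of whose other endpoints is an end-vertex of a path component; it is heavy if it is incident to at least three balanced edges whose other endpoints are end-vertices of path components. A vertex of $V_3$ is dangerous if one of its path neighbors is heavy and the other is moderate. *)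

theory Defs
  imports Main
begin

definition simple_graph :: "'a set \<Rightarrow> ('a \<Rightarrow> 'a \<Rightarrow> bool) \<Rightarrow> bool" where
  "simple_graph V E \<longleftrightarrow> finite V \<and>
     (\<forall>x y. E x y \<longrightarrow> x \<in> V \<and> y \<in> V \<and> x \<noteq> y \<and> E y x)"

definition regular :: "nat \<Rightarrow> 'a set \<Rightarrow> ('a \<Rightarrow> 'a \<Rightarrow> bool) \<Rightarrow> bool" where
  "regular d V E \<longleftrightarrow> (\<forall>v\<in>V. card {u. E v u} = d)"

definition is_path :: "'a set \<Rightarrow> ('a \<Rightarrow> 'a \<Rightarrow> bool) \<Rightarrow> 'a list \<Rightarrow> bool" where
  "is_path V E Q \<longleftrightarrow> Q \<noteq> [] \<and> distinct Q \<and> set Q \<subseteq> V \<and>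
     (\<forall>k. Suc k < length Q \<longrightarrow> E (Q ! k) (Q ! Suc k))"

definition path_partition :: "'a set \<Rightarrow> ('a \<Rightarrow> 'a \<Rightarrow> bool) \<Rightarrow> 'a list set \<Rightarrow> bool" where
  "path_partition V E S \<longleftrightarrow> (\<forall>Q\<in>S. is_path V E Q) \<and>
     (\<forall>Q\<in>S. \<forall>Q'\<in>S. Q \<noteq> Q' \<longrightarrow> set Q \<inter> set Q' = {}) \<and>
     \<Union> (set ` S) = V"

definition has_spanning_cycle :: "('a \<Rightarrow> 'a \<Rightarrow> bool) \<Rightarrow> 'a set \<Rightarrow> bool" where
  "has_spanning_cycle E A \<longleftrightarrow> (\<exists>ys. distinct ys \<and> set ys = A \<and> 3 \<le> length ys \<and>
     (\<forall>k. Suc k < length ys \<longrightarrow> E (ys ! k) (ys ! Suc k)) \<and> E (last ys) (hd ys))"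

definition cycle_comp :: "('a \<Rightarrow> 'a \<Rightarrow> bool) \<Rightarrow> 'a list \<Rightarrow> bool" where
  "cycle_comp E Q \<longleftrightarrow> 3 \<le> length Q \<and> has_spanning_cycle E (set Q)"

definition path_comp :: "('a \<Rightarrow> 'a \<Rightarrow> bool) \<Rightarrow> 'a list \<Rightarrow> bool" where
  "path_comp E Q \<longleftrightarrow> 2 \<le> length Q \<and> \<not> cycle_comp E Q"

definition canonical :: "'a set \<Rightarrow> ('a \<Rightarrow> 'a \<Rightarrow> bool) \<Rightarrow> 'a list set \<Rightarrow> bool" where
  "canonical V E S \<longleftrightarrow> path_partition V E S \<and>
     (\<forall>T. path_partition V E T \<longrightarrow> card S \<le> card T) \<and>
     (\<forall>T. path_partition V E T \<and> card T = card S \<longrightarrow>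
          card {Q\<in>T. cycle_comp E Q} \<le> card {Q\<in>S. cycle_comp E Q}) \<and>
     (\<forall>Q\<in>S. 2 \<le> length Q)"

definition path_nb :: "('a \<Rightarrow> 'a \<Rightarrow> bool) \<Rightarrow> 'a list set \<Rightarrow> 'a \<Rightarrow> 'a \<Rightarrow> bool" where
  "path_nb E S x y \<longleftrightarrow> (\<exists>Q\<in>S. path_comp E Q \<and> (\<exists>k. Suc k < length Q \<and>
     ((Q ! k = x \<and> Q ! Suc k = y) \<or> (Q ! k = y \<and> Q ! Suc k = x))))"

definition path_end :: "('a \<Rightarrow> 'a \<Rightarrow> bool) \<Rightarrow> 'a list set \<Rightarrow> 'a \<Rightarrow> bool" where
  "path_end E S v \<longleftrightarrow> (\<exists>Q\<in>S. path_comp E Q \<and> (v = hd Q \<or> v = last Q))"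

definition in_cycle_comp :: "('a \<Rightarrow> 'a \<Rightarrow> bool) \<Rightarrow> 'a list set \<Rightarrow> 'a \<Rightarrow> bool" where
  "in_cycle_comp E S v \<longleftrightarrow> (\<exists>Q\<in>S. cycle_comp E Q \<and> v \<in> set Q)"

definition free_edge :: "('a \<Rightarrow> 'a \<Rightarrow> bool) \<Rightarrow> 'a list set \<Rightarrow> 'a \<Rightarrow> 'a \<Rightarrow> bool" where
  "free_edge E S x y \<longleftrightarrow> E x y \<and> \<not> path_nb E S x y \<and>
     \<not> (\<exists>Q\<in>S. cycle_comp E Q \<and> x \<in> set Q \<and> y \<in> set Q)"

definition V1 :: "('a \<Rightarrow> 'a \<Rightarrow> bool) \<Rightarrow> 'a list set \<Rightarrow> 'a set" where
  "V1 E S = {v. path_end E S v \<or> in_cycle_comp E S v}"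

definition V2 :: "'a set \<Rightarrow> ('a \<Rightarrow> 'a \<Rightarrow> bool) \<Rightarrow> 'a list set \<Rightarrow> 'a set" where
  "V2 V E S = {v\<in>V. v \<notin> V1 E S \<and> (\<exists>w\<in>V1 E S. free_edge E S v w)}"

definition V3 :: "'a set \<Rightarrow> ('a \<Rightarrow> 'a \<Rightarrow> bool) \<Rightarrow> 'a list set \<Rightarrow> 'a set" where
  "V3 V E S = {v\<in>V. v \<notin> V1 E S \<and> v \<notin> V2 V E S \<and>
                  (\<forall>w. path_nb E S v w \<longrightarrow> w \<in> V2 V E S)}"

definition balanced :: "'a set \<Rightarrow> ('a \<Rightarrow> 'a \<Rightarrow> bool) \<Rightarrow> 'a list set \<Rightarrow> 'a \<Rightarrow> 'a \<Rightarrow> bool" where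
  "balanced V E S x y \<longleftrightarrow> free_edge E S x y \<and>
     ((x \<in> V1 E S \<and> y \<in> V2 V E S) \<or> (x \<in> V2 V E S \<and> y \<in> V1 E S))"

definition moderate :: "'a set \<Rightarrow> ('a \<Rightarrow> 'a \<Rightarrow> bool) \<Rightarrow> 'a list set \<Rightarrow> 'a \<Rightarrow> bool" where
  "moderate V E S x \<longleftrightarrow> x \<in> V2 V E S \<and> 2 \<le> card {y. balanced V E S x y} \<and>
     (\<exists>y. balanced V E S x y \<and> path_end E S y)"

definition heavy :: "'a set \<Rightarrow> ('a \<Rightarrow> 'a \<Rightarrow> bool) \<Rightarrow> 'a list set \<Rightarrow> 'a \<Rightarrow> bool" where
  "heavy V E S x \<longleftrightarrow> x \<in> V2 V E S \<and> 3 \<le> card {y. balanced V E S x y \<and> path_end E S y}"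

definition dangerous :: "'a set \<Rightarrow> ('a \<Rightarrow> 'a \<Rightarrow> bool) \<Rightarrow> 'a list set \<Rightarrow> 'a \<Rightarrow> bool" where
  "dangerous V E S v \<longleftrightarrow> v \<in> V3 V E S \<and>
     (\<exists>a b. path_nb E S v a \<and> path_nb E S v b \<and> a \<noteq> b \<and>
            heavy V E S a \<and> moderate V E S b)"

end

theory Submission
  imports Defs "HOL-Library.Multiset"
begin


lemma succ_iff: "(\<forall>k. Suc k < length Q \<longrightarrow> E (Q!k) (Q!Suc k)) \<longleftrightarrow> successively E Q"
proof (induction Q)
  case (Cons x xs)
  show ?case
  proof (cases xs)
    case (Cons y ys)
    have "(\<forall>k. Suc k < length (x#y#ys) \<longrightarrow> E ((x#y#ys)!k) ((x#y#ys)!Suc k)) \<longleftrightarrow>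
          E x y \<and> (\<forall>k. Suc k < length (y#ys) \<longrightarrow> E ((y#ys)!k) ((y#ys)!Suc k))"
      (is "?L \<longleftrightarrow> ?R")
    proof
      assume ?L then show ?R by (metis Suc_less_eq length_Cons nth_Cons_0 nth_Cons_Suc zero_less_Suc)
    next
      assume ?R then show ?L by (metis length_Cons less_Suc_eq_0_disj nat.inject nth_Cons_0 nth_Cons_Suc old.nat.exhaust)
    qed
    then show ?thesis using Cons.IH Cons by simp
  qed simp
qed simp

lemma is_path_iff: "is_path V E Q \<longleftrightarrow> Q \<noteq> [] \<and> distinct Q \<and> set Q \<subseteq> V \<and> successively E Q"
  unfolding is_path_def succ_iff ..

definition nbr :: "'a list \<Rightarrow> 'a \<Rightarrow> 'a \<Rightarrow> bool" where
  "nbr L a b \<longleftrightarrow> (\<exists>k. Suc k < length L \<and> ((L!k = a \<and> L!Suc k = b) \<or> (L!k = b \<and> L!Suc k = a)))"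

lemma path_nb_nbr: "path_nb E S a b \<longleftrightarrow> (\<exists>Q\<in>S. path_comp E Q \<and> nbr Q a b)"
  unfolding path_nb_def nbr_def ..

lemma nbr_sym: "nbr L a b = nbr L b a" unfolding nbr_def by blast

lemma nbr_set: "nbr L a b \<Longrightarrow> a \<in> set L \<and> b \<in> set L"
  unfolding nbr_def by (metis Suc_lessD nth_mem)

lemma nbr_rev: "nbr (rev L) a b = nbr L a b"
proof -
  have *: "nbr (rev L) a b" if "nbr L a b" for L :: "'a list" and a b
  proof -
    from that obtain k where k: "Suc k < length L" "(L!k = a \<and> L!Suc k = b) \<or> (L!k = b \<and> L!Suc k = a)"
      unfolding nbr_def by blast
    define j where "j = length L - 2 - k"
    have j1: "Suc j < length (rev L)" using k by (simp add: j_def)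
    have e1: "length L - Suc j = Suc k" using k by (simp add: j_def)
    have e2: "length L - Suc (Suc j) = k" using k by (simp add: j_def)
    have "rev L ! j = L ! Suc k" using k e1 j1 by (simp add: rev_nth)
    moreover have "rev L ! Suc j = L ! k" using k e2 j1 by (simp add: rev_nth)
    ultimately show ?thesis using k j1 unfolding nbr_def by metis
  qed
  show ?thesis using *[of "rev L"] *[of L] by auto
qed

lemma nbr_decomp:
  assumes "distinct (xs @ a # ys)"
  shows "nbr (xs @ a # ys) a b \<longleftrightarrow> (xs \<noteq> [] \<and> b = last xs) \<or> (ys \<noteq> [] \<and> b = hd ys)"
proof
  let ?L = "xs @ a # ys"
  have ia: "?L ! length xs = a" by simp
  assume "nbr ?L a b"
  then obtain k where k: "Suc k < length ?L" "(?L!k = a \<and> ?L!Suc k = b) \<or> (?L!k = b \<and> ?L!Suc k = a)"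
    unfolding nbr_def by blast
  show "(xs \<noteq> [] \<and> b = last xs) \<or> (ys \<noteq> [] \<and> b = hd ys)"
  proof (cases "?L!k = a")
    case True
    then have "k = length xs" using nth_eq_iff_index_eq[OF assms, of k "length xs"] k(1) ia by simp
    then show ?thesis using k True assms
      by (cases ys) (auto simp: nth_append)
  next
    case False
    then have b: "?L!k = b" "?L!Suc k = a" using k by auto
    then have "Suc k = length xs" using nth_eq_iff_index_eq[OF assms, of "Suc k" "length xs"] k(1) ia by simp
    then show ?thesis using b
      by (cases xs rule: rev_cases) (auto simp: nth_append)
  qed
next
  let ?L = "xs @ a # ys"
  assume "(xs \<noteq> [] \<and> b = last xs) \<or> (ys \<noteq> [] \<and> b = hd ys)"
  then show "nbr ?L a b"
  proof
    assume h: "xs \<noteq> [] \<and> b = last xs"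
    then obtain xs' where "xs = xs' @ [b]" by (metis append_butlast_last_id)
    then show ?thesis unfolding nbr_def
      by (intro exI[of _ "length xs'"]) (auto simp: nth_append)
  next
    assume h: "ys \<noteq> [] \<and> b = hd ys"
    then obtain ys' where "ys = b # ys'" by (metis list.collapse)
    then show ?thesis unfolding nbr_def
      by (intro exI[of _ "length xs"]) (auto simp: nth_append)
  qed
qed

lemma card3_two: "3 \<le> card A \<Longrightarrow> \<exists>e\<in>A. e \<noteq> a \<and> e \<noteq> b"
proof (rule ccontr)
  assume "3 \<le> card A" "\<not> (\<exists>e\<in>A. e \<noteq> a \<and> e \<noteq> b)"
  then have "A \<subseteq> {a, b}" by blast
  then have "card A \<le> card {a,b}" by (intro card_mono) auto
  also have "\<dots> \<le> 2" by (simp add: card_insert_if)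
  finally show False using \<open>3 \<le> card A\<close> by simp
qed

lemma card2_one: "2 \<le> card A \<Longrightarrow> \<exists>e\<in>A. e \<noteq> a"
proof (rule ccontr)
  assume "2 \<le> card A" "\<not> (\<exists>e\<in>A. e \<noteq> a)"
  then have "A \<subseteq> {a}" by blast
  then have "card A \<le> card {a}" by (intro card_mono) auto
  then show False using \<open>2 \<le> card A\<close> by simp
qed

lemma card3_sub: "3 \<le> card A \<Longrightarrow> A \<subseteq> {a,b,c} \<Longrightarrow> a \<in> A \<and> b \<in> A \<and> c \<in> A \<and> a \<noteq> b \<and> a \<noteq> c \<and> b \<noteq> c"
proof -
  assume h: "3 \<le> card A" "A \<subseteq> {a,b,c}"
  have "card A \<le> card {a,b,c}" using h by (intro card_mono) auto
  then have c3: "card {a,b,c} \<ge> 3" using h by simp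
  then have d: "a \<noteq> b \<and> a \<noteq> c \<and> b \<noteq> c" by (auto simp: card_insert_if split: if_splits)
  have "A = {a,b,c}"
  proof (rule card_subset_eq)
    show "finite {a,b,c}" by simp
    show "card A = card {a,b,c}" using h c3 \<open>card A \<le> card {a,b,c}\<close> d by (simp add: card_insert_if)
  qed (use h in auto)
  then show ?thesis using d by simp
qed



locale ctx =
  fixes V :: "'a set" and E :: "'a \<Rightarrow> 'a \<Rightarrow> bool" and S :: "'a list set"
  assumes G: "simple_graph V E" and can: "canonical V E S"
begin

lemma Esym: "E a b \<Longrightarrow> E b a" using G unfolding simple_graph_def by blast
lemma Ein: "E a b \<Longrightarrow> a \<in> V \<and> b \<in> V \<and> a \<noteq> b" using G unfolding simple_graph_def by blast
lemma finV: "finite V" using G unfolding simple_graph_def by blast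
lemma pp: "path_partition V E S" using can unfolding canonical_def by blast
lemma minS: "path_partition V E T \<Longrightarrow> card S \<le> card T" using can unfolding canonical_def by blast
lemma cycS: "path_partition V E T \<Longrightarrow> card T = card S \<Longrightarrow>
   card {Q\<in>T. cycle_comp E Q} \<le> card {Q\<in>S. cycle_comp E Q}" using can unfolding canonical_def by blast

lemma pp_finite: assumes "path_partition V E T" shows "finite T"
proof -
  have "T \<subseteq> {xs. set xs \<subseteq> V \<and> distinct xs}"
    using assms unfolding path_partition_def is_path_def by blast
  then show ?thesis using finite_subset finite_subset_distinct[OF finV] by blast
qed

lemma pp_path: "path_partition V E T \<Longrightarrow> Q \<in> T \<Longrightarrow> is_path V E Q"
  unfolding path_partition_def by blast
lemma pp_disj: "path_partition V E T \<Longrightarrow> Q \<in> T \<Longrightarrow> Q' \<in> T \<Longrightarrow> Q \<noteq> Q' \<Longrightarrow> set Q \<inter> set Q' = {}"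
  unfolding path_partition_def by blast
lemma pp_uniq: "path_partition V E T \<Longrightarrow> Q \<in> T \<Longrightarrow> Q' \<in> T \<Longrightarrow> a \<in> set Q \<Longrightarrow> a \<in> set Q' \<Longrightarrow> Q = Q'"
  unfolding path_partition_def by blast
lemma pp_union: "path_partition V E T \<Longrightarrow> \<Union>(set ` T) = V"
  unfolding path_partition_def by blast

lemma succ_rev[simp]: "successively E (rev xs) = successively E xs"
  by (auto simp: successively_rev intro: successively_mono Esym)

lemma is_path_rev[simp]: "is_path V E (rev Q) = is_path V E Q"
  by (simp only: is_path_iff succ_rev set_rev distinct_rev) simp

lemma cyc_of_path:
  assumes "is_path V E N" "3 \<le> length N" "E (hd N) (last N)"
  shows "cycle_comp E N"
  unfolding cycle_comp_def has_spanning_cycle_def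
  using assms Esym[OF assms(3)] by (auto simp: is_path_def)

lemma cyc_term:
  assumes "path_partition V E T" "C \<in> T" "cycle_comp E C" "b \<in> set C"
  shows "\<exists>B'. is_path V E B' \<and> set B' = set C \<and> hd B' = b"
proof -
  obtain ys where ys: "distinct ys" "set ys = set C" "3 \<le> length ys" "successively E ys"
      "E (last ys) (hd ys)"
    using assms(3) unfolding cycle_comp_def has_spanning_cycle_def succ_iff by blast
  obtain xs1 xs2 where sp: "ys = xs1 @ b # xs2" using ys(2) assms(4) by (metis split_list)
  have sub: "set C \<subseteq> V" using pp_path[OF assms(1,2)] unfolding is_path_def by blast
  let ?B = "b # xs2 @ xs1"
  have "successively E ?B"
  proof (cases "xs1 = []")
    case True then show ?thesis using ys(4) sp by simp
  next
    case False
    have "E (last (b # xs2)) (hd xs1)" using ys(5) sp False by (simp add: last_append)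
    have s1: "successively E (b # xs2)" "successively E xs1"
      using ys(4) sp by (simp_all add: successively_append_iff)
    have "successively E ((b # xs2) @ xs1)"
      using s1 \<open>E (last (b # xs2)) (hd xs1)\<close> by (simp only: successively_append_iff) simp
    then show ?thesis by simp
  qed
  moreover have "distinct ?B" "set ?B = set C" using ys sp by auto
  ultimately show ?thesis using sub by (intro exI[of _ ?B]) (auto simp: is_path_iff)
qed

lemma merge_contra:
  assumes T: "path_partition V E T" "card T = card S"
    and AB: "A \<in> T" "B \<in> T" "A \<noteq> B"
    and A': "is_path V E A'" "set A' = set A"
    and B': "is_path V E B'" "set B' = set B"
    and e: "E (last A') (hd B')"
  shows False
proof -
  have fin: "finite T" using pp_finite[OF T(1)] .
  have dAB: "set A \<inter> set B = {}" using pp_disj[OF T(1) AB] .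
  let ?N = "A' @ B'"
  let ?T = "(T - {A, B}) \<union> {?N}"
  have pN: "is_path V E ?N" using A' B' dAB e
    by (auto simp: is_path_iff successively_append_iff)
  have nA: "A \<noteq> []" using pp_path[OF T(1) AB(1)] unfolding is_path_def by blast
  have notin: "?N \<notin> T - {A,B}"
  proof
    assume "?N \<in> T - {A,B}"
    then have "set ?N \<inter> set A = {}" using pp_disj[OF T(1), of ?N A] AB by auto
    then show False using A' nA by auto
  qed
  have ppT: "path_partition V E ?T"
    unfolding path_partition_def
  proof (intro conjI)
    show "\<forall>Q\<in>?T. is_path V E Q" using pN pp_path[OF T(1)] by auto
    show "\<forall>Q\<in>?T. \<forall>Q'\<in>?T. Q \<noteq> Q' \<longrightarrow> set Q \<inter> set Q' = {}"
    proof (intro ballI impI)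
      fix Q Q' assume q: "Q \<in> ?T" "Q' \<in> ?T" "Q \<noteq> Q'"
      show "set Q \<inter> set Q' = {}"
      proof (cases "Q = ?N")
        case True
        then have "Q' \<in> T" "Q' \<noteq> A" "Q' \<noteq> B" using q by auto
        then show ?thesis using True pp_disj[OF T(1), of Q' A] pp_disj[OF T(1), of Q' B] AB A'(2) B'(2) by auto
      next
        case False
        show ?thesis
        proof (cases "Q' = ?N")
          case True
          then have "Q \<in> T" "Q \<noteq> A" "Q \<noteq> B" using q False by auto
          then show ?thesis using True pp_disj[OF T(1), of Q A] pp_disj[OF T(1), of Q B] AB A'(2) B'(2) by auto
        next
          case False2: False
          then show ?thesis using q False pp_disj[OF T(1), of Q Q'] by auto
        qed
      qed
    qed
    show "\<Union> (set ` ?T) = V"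
    proof -
      have "\<Union> (set ` ?T) = \<Union> (set ` (T - {A,B})) \<union> set A \<union> set B" using A' B' by auto
      also have "\<dots> = \<Union> (set ` T)" using AB by auto
      finally show ?thesis using pp_union[OF T(1)] by simp
    qed
  qed
  have c1: "card ?T = card (T - {A,B}) + 1" using notin fin by simp
  have c2: "card (T - {A,B}) = card T - 2" using AB fin by (simp add: card_Diff_subset)
  have c3: "card T \<ge> 2" using AB fin
    by (metis card_2_iff card_mono empty_subsetI insert_subset)
  have "card ?T < card T" using c1 c2 c3 by linarith
  then show False using minS[OF ppT] T(2) by simp
qed

lemma cycle_not_path: "path_comp E Q \<Longrightarrow> \<not> cycle_comp E Q" unfolding path_comp_def by blast

lemma switch:
  assumes Old: "Old \<subseteq> S" "\<forall>Q\<in>Old. \<not> cycle_comp E Q"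
    and New: "finite New" "\<forall>N\<in>New. is_path V E N"
      "\<forall>N\<in>New. \<forall>N'\<in>New. N \<noteq> N' \<longrightarrow> set N \<inter> set N' = {}"
      "\<Union>(set ` New) = \<Union>(set ` Old)" "card New \<le> card Old"
  shows "path_partition V E ((S - Old) \<union> New) \<and> card ((S - Old) \<union> New) = card S
     \<and> (\<forall>N\<in>New. \<not> cycle_comp E N) \<and> (S - Old) \<inter> New = {}"
proof -
  let ?T = "(S - Old) \<union> New"
  have finS: "finite S" using pp_finite[OF pp] .
  have finO: "finite Old" using finS Old(1) finite_subset by blast
  have disj: "(S - Old) \<inter> New = {}"
  proof (rule ccontr)
    assume "(S - Old) \<inter> New \<noteq> {}"
    then obtain N where N: "N \<in> S" "N \<notin> Old" "N \<in> New" by blast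
    then have "N \<noteq> []" using New(2) unfolding is_path_def by blast
    then obtain a where a: "a \<in> set N" by (metis list.set_intros(1) neq_Nil_conv)
    then obtain Ob where Ob: "Ob \<in> Old" "a \<in> set Ob" using New(4) N(3) by blast
    then have "Ob = N" using pp_uniq[OF pp, of Ob N a] Old(1) N a by blast
    then show False using Ob N by simp
  qed
  have sub: "\<forall>N\<in>New. set N \<subseteq> \<Union>(set ` Old)" using New(4) by blast
  have ppT: "path_partition V E ?T"
    unfolding path_partition_def
  proof (intro conjI)
    show "\<forall>Q\<in>?T. is_path V E Q" using New(2) pp_path[OF pp] by blast
    show "\<forall>Q\<in>?T. \<forall>Q'\<in>?T. Q \<noteq> Q' \<longrightarrow> set Q \<inter> set Q' = {}"
    proof (intro ballI impI)
      fix Q Q' assume q: "Q \<in> ?T" "Q' \<in> ?T" "Q \<noteq> Q'"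
      have X: "set A \<inter> set N = {}" if "A \<in> S - Old" "N \<in> New" for A N
      proof -
        have "set A \<inter> set Ob = {}" if "Ob \<in> Old" for Ob
          using pp_disj[OF pp, of A Ob] that \<open>A \<in> S - Old\<close> Old(1) by auto
        then show ?thesis using sub \<open>N \<in> New\<close> by blast
      qed
      show "set Q \<inter> set Q' = {}"
        using q X[of Q Q'] X[of Q' Q] New(3) pp_disj[OF pp, of Q Q'] by auto
    qed
    show "\<Union> (set ` ?T) = V"
    proof -
      have "\<Union> (set ` ?T) = \<Union> (set ` (S - Old)) \<union> \<Union>(set ` Old)" using New(4) by auto
      also have "\<dots> = \<Union> (set ` S)" using Old(1) by auto
      finally show ?thesis using pp_union[OF pp] by simp
    qed
  qed
  have cT: "card ?T = card (S - Old) + card New" using disj finS New(1) by (simp add: card_Un_disjoint)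
  have cSO: "card (S - Old) = card S - card Old" using Old(1) finO by (simp add: card_Diff_subset)
  have cO: "card Old \<le> card S" using Old(1) finS by (simp add: card_mono)
  have "card S \<le> card ?T" using minS[OF ppT] .
  then have eqT: "card ?T = card S" using cT cSO cO New(5) by linarith
  have cyc: "{Q\<in>?T. cycle_comp E Q} = {Q\<in>S. cycle_comp E Q} \<union> {N\<in>New. cycle_comp E N}"
    using Old by auto
  have dd: "{Q\<in>S. cycle_comp E Q} \<inter> {N\<in>New. cycle_comp E N} = {}" using disj Old by auto
  have "card {Q\<in>?T. cycle_comp E Q} = card {Q\<in>S. cycle_comp E Q} + card {N\<in>New. cycle_comp E N}"
    unfolding cyc using dd finS New(1) by (simp add: card_Un_disjoint)
  then have "card {N\<in>New. cycle_comp E N} = 0" using cycS[OF ppT eqT] by linarith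
  then have "\<forall>N\<in>New. \<not> cycle_comp E N" using New(1) by auto
  then show ?thesis using ppT eqT disj by blast
qed

lemma term_hd: "is_path V E N \<Longrightarrow> \<exists>N'. is_path V E N' \<and> set N' = set N \<and> hd N' = hd N" by blast
lemma term_last: "is_path V E N \<Longrightarrow> \<exists>N'. is_path V E N' \<and> set N' = set N \<and> hd N' = last N"
  by (intro exI[of _ "rev N"]) (simp add: hd_rev)

lemma merge_ends:
  assumes T: "path_partition V E T" "card T = card S" and AB: "A \<in> T" "B \<in> T" "A \<noteq> B"
    and a: "a = hd A \<or> a = last A" and b: "b = hd B \<or> b = last B" and e: "E a b"
  shows False
proof -
  have pA: "is_path V E A" and pB: "is_path V E B" using pp_path[OF T(1)] AB by auto
  obtain A' where A': "is_path V E A'" "set A' = set A" "last A' = a"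
    using a pA by (metis is_path_rev last_rev set_rev)
  obtain B' where B': "is_path V E B'" "set B' = set B" "hd B' = b"
    using b pB by (metis hd_rev is_path_rev set_rev)
  show False using merge_contra[OF T AB A'(1,2) B'(1,2)] A'(3) B'(3) e by simp
qed

lemma merge_cyc:
  assumes T: "path_partition V E T" "card T = card S" and AB: "A \<in> T" "C \<in> T" "A \<noteq> C"
    and a: "a = hd A \<or> a = last A" and c: "cycle_comp E C" "b \<in> set C" and e: "E a b"
  shows False
proof -
  have pA: "is_path V E A" using pp_path[OF T(1)] AB by auto
  obtain A' where A': "is_path V E A'" "set A' = set A" "last A' = a"
    using a pA by (metis is_path_rev last_rev set_rev)
  obtain B' where B': "is_path V E B'" "set B' = set C" "hd B' = b"
    using cyc_term[OF T(1) AB(2) c] by blast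
  show False using merge_contra[OF T AB A'(1,2) B'(1,2)] A'(3) B'(3) e by simp
qed

lemma close:
  assumes Old: "Old \<subseteq> S" "\<forall>Q\<in>Old. \<not> cycle_comp E Q"
    and New: "finite New" "\<forall>N\<in>New. is_path V E N"
      "\<forall>N\<in>New. \<forall>N'\<in>New. N \<noteq> N' \<longrightarrow> set N \<inter> set N' = {}"
      "\<Union>(set ` New) = \<Union>(set ` Old)" "card New \<le> card Old"
    and N: "N \<in> New" "w = hd N \<or> w = last N" and wz: "E w z" "z \<in> V1 E S" "z \<noteq> w"
    and EO: "\<forall>Q\<in>Old. \<forall>c. (c = hd Q \<or> c = last Q) \<longrightarrow> c = z \<longrightarrow>
        (\<exists>N'\<in>New. N' \<noteq> N \<and> (c = hd N' \<or> c = last N')) \<or> ((c = hd N \<or> c = last N) \<and> 3 \<le> length N)"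
  shows False
proof -
  note sw = switch[OF Old New]
  let ?T = "(S - Old) \<union> New"
  have ppT: "path_partition V E ?T" and cT: "card ?T = card S" and nc: "\<forall>N\<in>New. \<not> cycle_comp E N"
    and dj: "(S - Old) \<inter> New = {}" using sw by blast+
  have NT: "N \<in> ?T" using N by blast
  have pN: "is_path V E N" using New(2) N by blast
  have endcase: False if Q: "Q \<in> Old" "z = hd Q \<or> z = last Q" for Q
  proof -
    from EO Q have "(\<exists>N'\<in>New. N' \<noteq> N \<and> (z = hd N' \<or> z = last N')) \<or> ((z = hd N \<or> z = last N) \<and> 3 \<le> length N)"
      by blast
    then show False
    proof
      assume "\<exists>N'\<in>New. N' \<noteq> N \<and> (z = hd N' \<or> z = last N')"
      then obtain N' where "N' \<in> New" "N' \<noteq> N" "z = hd N' \<or> z = last N'" by blast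
      then show False using merge_ends[OF ppT cT NT, of N' w z] N wz by blast
    next
      assume h: "(z = hd N \<or> z = last N) \<and> 3 \<le> length N"
      then have "E (hd N) (last N)" using N(2) wz(1,3) Esym by auto
      then have "cycle_comp E N" using cyc_of_path[OF pN] h by blast
      then show False using nc N by blast
    qed
  qed
  from wz(2) have "path_end E S z \<or> in_cycle_comp E S z" unfolding V1_def by blast
  then show False
  proof
    assume "path_end E S z"
    then obtain Q where Q: "Q \<in> S" "path_comp E Q" "z = hd Q \<or> z = last Q" unfolding path_end_def by blast
    show False
    proof (cases "Q \<in> Old")
      case True then show False using endcase Q by blast
    next
      case False
      then have "Q \<in> ?T" "Q \<noteq> N" using Q dj N by auto
      then show False using merge_ends[OF ppT cT NT, of Q w z] N wz Q by blast
    qed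
  next
    assume "in_cycle_comp E S z"
    then obtain C where C: "C \<in> S" "cycle_comp E C" "z \<in> set C" unfolding in_cycle_comp_def by blast
    then have "C \<notin> Old" using Old by blast
    then have "C \<in> ?T" "C \<noteq> N" using C dj N by auto
    then show False using merge_cyc[OF ppT cT NT, of C w z] N wz C by blast
  qed
qed

lemma path_ne: "is_path V E N \<Longrightarrow> N \<noteq> []" unfolding is_path_def by blast

lemma close1:
  assumes O: "O1 \<in> S" "path_comp E O1"
    and N: "is_path V E N1" "set N1 = set O1"
    and w: "w = hd N1 \<or> w = last N1" and wz: "E w z" "z \<in> V1 E S" "z \<noteq> w"
    and EO: "\<forall>c. (c = hd O1 \<or> c = last O1) \<longrightarrow> c = z \<longrightarrow> ((c = hd N1 \<or> c = last N1) \<and> 3 \<le> length N1)"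
  shows False
  by (rule close[of "{O1}" "{N1}" N1 w z]) (use O N w wz EO cycle_not_path in auto)

lemma close2:
  assumes O: "O1 \<in> S" "O2 \<in> S" "O1 \<noteq> O2" "path_comp E O1" "path_comp E O2"
    and N: "is_path V E N1" "is_path V E N2" "set N1 \<inter> set N2 = {}" "set N1 \<union> set N2 = set O1 \<union> set O2"
    and w: "w = hd N1 \<or> w = last N1" and wz: "E w z" "z \<in> V1 E S" "z \<noteq> w"
    and EO: "\<forall>c. (c = hd O1 \<or> c = last O1 \<or> c = hd O2 \<or> c = last O2) \<longrightarrow> c = z \<longrightarrow>
       c = hd N2 \<or> c = last N2 \<or> ((c = hd N1 \<or> c = last N1) \<and> 3 \<le> length N1)"
  shows False
proof -
  have ne: "N1 \<noteq> N2" using N(1,3) path_ne by fastforce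
  show False
  proof (rule close[of "{O1,O2}" "{N1,N2}" N1 w z])
    show "card {N1, N2} \<le> card {O1, O2}" using O(3) by (simp add: card_insert_if)
  qed (use O N w wz EO cycle_not_path ne in \<open>auto simp: Int_commute\<close>)
qed

lemma close3:
  assumes O: "O1 \<in> S" "O2 \<in> S" "O3 \<in> S" "O1 \<noteq> O2" "O1 \<noteq> O3" "O2 \<noteq> O3"
       "path_comp E O1" "path_comp E O2" "path_comp E O3"
    and N: "is_path V E N1" "is_path V E N2" "is_path V E N3"
       "set N1 \<inter> set N2 = {}" "set N1 \<inter> set N3 = {}" "set N2 \<inter> set N3 = {}"
       "set N1 \<union> set N2 \<union> set N3 = set O1 \<union> set O2 \<union> set O3"
    and w: "w = hd N1 \<or> w = last N1" and wz: "E w z" "z \<in> V1 E S" "z \<noteq> w"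
    and EO: "\<forall>c. (c = hd O1 \<or> c = last O1 \<or> c = hd O2 \<or> c = last O2 \<or> c = hd O3 \<or> c = last O3) \<longrightarrow> c = z \<longrightarrow>
       c = hd N2 \<or> c = last N2 \<or> c = hd N3 \<or> c = last N3 \<or> ((c = hd N1 \<or> c = last N1) \<and> 3 \<le> length N1)"
  shows False
proof -
  have ne: "N1 \<noteq> N2" "N1 \<noteq> N3" "N2 \<noteq> N3" using N path_ne by fastforce+
  show False
  proof (rule close[of "{O1,O2,O3}" "{N1,N2,N3}" N1 w z])
    show "card {N1, N2, N3} \<le> card {O1, O2, O3}" using O ne by (simp add: card_insert_if)
    show "\<Union> (set ` {N1, N2, N3}) = \<Union> (set ` {O1, O2, O3})" using N(7) by auto
  qed (use O N w wz EO cycle_not_path ne in \<open>auto simp: Int_commute\<close>)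
qed

lemma cyc2:
  assumes O: "O1 \<in> S" "O2 \<in> S" "O1 \<noteq> O2" "path_comp E O1" "path_comp E O2"
    and N: "is_path V E N1" "is_path V E N2" "set N1 \<inter> set N2 = {}" "set N1 \<union> set N2 = set O1 \<union> set O2"
    and c: "3 \<le> length N1" "E (hd N1) (last N1)"
  shows False
proof -
  have ne: "N1 \<noteq> N2" using N(1,3) path_ne by fastforce
  have "card {N1, N2} \<le> card {O1, O2}" using O(3) by (simp add: card_insert_if)
  then have "\<forall>N\<in>{N1,N2}. \<not> cycle_comp E N"
    using switch[of "{O1,O2}" "{N1,N2}"] O N ne cycle_not_path by (auto simp: Int_commute)
  then show False using cyc_of_path[OF N(1) c] by blast
qed

end


declare successively_rev[simp del]


context ctx begin

lemma pnb_R: "R \<in> S \<Longrightarrow> a \<in> set R \<Longrightarrow> path_nb E S a b \<longleftrightarrow> path_comp E R \<and> nbr R a b"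
  unfolding path_nb_nbr using pp_uniq[OF pp] nbr_set by metis

lemma V1_R: assumes "R \<in> S" "path_comp E R" "a \<in> set R"
  shows "a \<in> V1 E S \<longleftrightarrow> a = hd R \<or> a = last R"
proof
  assume "a \<in> V1 E S"
  then have "path_end E S a \<or> in_cycle_comp E S a" unfolding V1_def by blast
  then show "a = hd R \<or> a = last R"
  proof
    assume "path_end E S a"
    then obtain Q where Q: "Q \<in> S" "path_comp E Q" "a = hd Q \<or> a = last Q" unfolding path_end_def by blast
    have "Q \<noteq> []" using pp_path[OF pp Q(1)] path_ne by blast
    then have "a \<in> set Q" using Q(3) by auto
    then have "Q = R" using pp_uniq[OF pp Q(1) assms(1)] assms(3) by blast
    then show ?thesis using Q by blast
  next
    assume "in_cycle_comp E S a"
    then obtain C where C: "C \<in> S" "cycle_comp E C" "a \<in> set C" unfolding in_cycle_comp_def by blast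
    then have "C = R" using pp_uniq[OF pp C(1) assms(1)] assms(3) by blast
    then show ?thesis using C assms(2) cycle_not_path by blast
  qed
next
  assume "a = hd R \<or> a = last R"
  then show "a \<in> V1 E S" using assms unfolding V1_def path_end_def by blast
qed

lemma free_R: assumes "R \<in> S" "path_comp E R" "a \<in> set R"
  shows "free_edge E S a b \<longleftrightarrow> E a b \<and> \<not> nbr R a b"
proof -
  have "\<not> (\<exists>Q\<in>S. cycle_comp E Q \<and> a \<in> set Q \<and> b \<in> set Q)"
    using pp_uniq[OF pp _ assms(1)] assms cycle_not_path by blast
  then show ?thesis unfolding free_edge_def using pnb_R[OF assms(1,3)] assms(2) by blast
qed

lemma E_commute: "E a b = E b a" using Esym by blast

lemma free_sym: assumes "free_edge E S a b" shows "free_edge E S b a"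
proof -
  have "E b a" using assms Esym unfolding free_edge_def by blast
  moreover have "\<not> path_nb E S b a" using assms nbr_sym unfolding free_edge_def path_nb_nbr by metis
  moreover have "\<not> (\<exists>Q\<in>S. cycle_comp E Q \<and> b \<in> set Q \<and> a \<in> set Q)" using assms unfolding free_edge_def by blast
  ultimately show ?thesis unfolding free_edge_def by blast
qed

lemma ends_or: "R' = R \<or> R' = rev R \<Longrightarrow> (c = hd R \<or> c = last R) \<longleftrightarrow> (c = hd R' \<or> c = last R')"
  by (auto simp: hd_rev last_rev)

lemma path_in_V: "is_path V E R \<Longrightarrow> set R \<subseteq> V" unfolding is_path_def by blast


lemma mk1:
  assumes "mset N1 = mset A" "distinct A" "set A \<subseteq> V" "N1 \<noteq> []" "successively E N1"
  shows "is_path V E N1 \<and> set N1 = set A"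
proof -
  have "set N1 = set A" using assms(1) by (metis set_mset_mset)
  moreover have "distinct N1" using assms(1,2) mset_eq_imp_distinct_iff by blast
  ultimately show ?thesis using assms by (simp add: is_path_iff)
qed

lemma mk2:
  assumes "mset N1 + mset N2 = mset A + mset B" "distinct (A @ B)" "set A \<subseteq> V" "set B \<subseteq> V"
    "N1 \<noteq> []" "N2 \<noteq> []" "successively E N1" "successively E N2"
  shows "is_path V E N1 \<and> is_path V E N2 \<and> set N1 \<inter> set N2 = {} \<and> set N1 \<union> set N2 = set A \<union> set B"
proof -
  have m: "mset (N1 @ N2) = mset (A @ B)" using assms(1) by simp
  have "set (N1 @ N2) = set (A @ B)" using m by (metis set_mset_mset)
  moreover have "distinct (N1 @ N2)" using m assms(2) mset_eq_imp_distinct_iff by blast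
  ultimately show ?thesis using assms unfolding is_path_iff
    by (simp only: distinct_append set_append) blast
qed

lemma mk3:
  assumes "mset N1 + mset N2 + mset N3 = mset A + mset B + mset C" "distinct (A @ B @ C)"
    "set A \<subseteq> V" "set B \<subseteq> V" "set C \<subseteq> V"
    "N1 \<noteq> []" "N2 \<noteq> []" "N3 \<noteq> []" "successively E N1" "successively E N2" "successively E N3"
  shows "is_path V E N1 \<and> is_path V E N2 \<and> is_path V E N3 \<and> set N1 \<inter> set N2 = {}
     \<and> set N1 \<inter> set N3 = {} \<and> set N2 \<inter> set N3 = {} \<and> set N1 \<union> set N2 \<union> set N3 = set A \<union> set B \<union> set C"
proof -
  have m: "mset (N1 @ N2 @ N3) = mset (A @ B @ C)" using assms(1) by (simp add: add.assoc)
  have "set (N1 @ N2 @ N3) = set (A @ B @ C)" using m by (metis set_mset_mset)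
  moreover have "distinct (N1 @ N2 @ N3)" using m assms(2) mset_eq_imp_distinct_iff by blast
  ultimately show ?thesis using assms unfolding is_path_iff
    by (simp only: distinct_append set_append) blast
qed


lemma far3:
  assumes "distinct (xs @ w # ys)" "\<not> nbr (xs @ w # ys) w z" "z = last (w # ys)" "z \<noteq> w"
  shows "2 \<le> length ys"
proof (rule ccontr)
  assume "\<not> 2 \<le> length ys"
  then have "ys = [] \<or> (\<exists>b. ys = [b])" by (cases ys) (auto simp: Suc_le_eq)
  then show False
  proof
    assume "ys = []" then show False using assms by simp
  next
    assume "\<exists>b. ys = [b]"
    then obtain b where b: "ys = [b]" by blast
    then have "nbr (xs @ w # ys) w z" using nbr_decomp[OF assms(1)] assms(3) by simp
    then show False using assms(2) by blast
  qed
qed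

lemma near3:
  assumes "distinct (xs @ w # ys)" "\<not> nbr (xs @ w # ys) w z" "z = hd (xs @ [w])" "z \<noteq> w"
  shows "2 \<le> length xs"
proof (rule ccontr)
  assume "\<not> 2 \<le> length xs"
  then have "xs = [] \<or> (\<exists>b. xs = [b])" by (cases xs) (auto simp: Suc_le_eq)
  then show False
  proof
    assume "xs = []" then show False using assms by simp
  next
    assume "\<exists>b. xs = [b]"
    then obtain b where b: "xs = [b]" by blast
    then have "nbr (xs @ w # ys) w z" using nbr_decomp[OF assms(1)] assms(3) by simp
    then show False using assms(2) by blast
  qed
qed

lemma comp_len: "R \<in> S \<Longrightarrow> path_comp E R \<Longrightarrow> 2 \<le> length R" unfolding path_comp_def by blast

end

locale ctxP = ctx +
  fixes Q P
  assumes QS: "Q \<in> S" and Qp: "path_comp E Q" and PQ: "P = Q \<or> P = rev Q"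
begin

lemma pQ: "is_path V E Q" using pp_path[OF pp QS] .
lemma pP: "is_path V E P" using PQ pQ by auto
lemma setP: "set P = set Q" using PQ by auto
lemma nbrP: "nbr P = nbr Q" using PQ by (auto simp: nbr_rev fun_eq_iff)
lemma endsQ: "(c = hd Q \<or> c = last Q) \<longleftrightarrow> (c = hd P \<or> c = last P)" using ends_or[OF PQ] by blast
lemma pnbP: "a \<in> set P \<Longrightarrow> path_nb E S a b \<longleftrightarrow> nbr P a b"
  using pnb_R[OF QS] Qp setP nbrP by simp
lemma V1P: "a \<in> set P \<Longrightarrow> a \<in> V1 E S \<longleftrightarrow> a = hd P \<or> a = last P"
  using V1_R[OF QS Qp] setP endsQ by simp
lemma freeP: "a \<in> set P \<Longrightarrow> free_edge E S a b \<longleftrightarrow> E a b \<and> \<not> nbr P a b"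
  using free_R[OF QS Qp] setP nbrP by simp
lemma otherP: "R \<in> S \<Longrightarrow> R \<noteq> Q \<Longrightarrow> set R \<inter> set P = {}"
  using pp_disj[OF pp _ QS] setP by blast

lemmas Pfacts = pP[unfolded is_path_iff]


end


context ctx begin

lemma bal_free: "balanced V E S x y \<Longrightarrow> free_edge E S x y" unfolding balanced_def by blast
lemma V2_notV1: "x \<in> V2 V E S \<Longrightarrow> x \<notin> V1 E S" unfolding V2_def by blast
lemma bal_V1: "balanced V E S x y \<Longrightarrow> x \<in> V2 V E S \<Longrightarrow> y \<in> V1 E S"
  unfolding balanced_def using V2_notV1 by blast
lemma free_E: "free_edge E S x y \<Longrightarrow> E x y" unfolding free_edge_def by blast

lemma heavy_mod: assumes "heavy V E S x" shows "moderate V E S x"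
proof -
  have x2: "x \<in> V2 V E S" and c3: "3 \<le> card {y. balanced V E S x y \<and> path_end E S y}"
    using assms unfolding heavy_def by blast+
  have fin: "finite {y. balanced V E S x y}"
    by (rule finite_subset[OF _ finV]) (auto dest!: bal_free free_E Ein)
  have "card {y. balanced V E S x y \<and> path_end E S y} \<le> card {y. balanced V E S x y}"
    by (rule card_mono[OF fin]) blast
  then have "2 \<le> card {y. balanced V E S x y}" using c3 by linarith
  moreover have "{y. balanced V E S x y \<and> path_end E S y} \<noteq> {}" using c3 by (metis card.empty not_numeral_le_zero)
  ultimately show ?thesis unfolding moderate_def using x2 by blast
qed

end

context ctxP begin

lemma classify:
  assumes "path_end E S e"
  shows "e = hd P \<or> e = last P \<or> (\<exists>Re Re'. Re \<in> S \<and> path_comp E Re \<and> Re \<noteq> Q \<and> (Re' = Re \<or> Re' = rev Re) \<and> hd Re' = e)"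
proof -
  obtain Re where Re: "Re \<in> S" "path_comp E Re" "e = hd Re \<or> e = last Re"
    using assms unfolding path_end_def by blast
  show ?thesis
  proof (cases "Re = Q")
    case True then show ?thesis using Re endsQ by blast
  next
    case False
    have "\<exists>Re'. (Re' = Re \<or> Re' = rev Re) \<and> hd Re' = e" using Re(3) by (auto simp: hd_rev)
    then show ?thesis using Re False by blast
  qed
qed

end


context ctxP begin

lemma C1_common:
  assumes dP: "P = pre @ x1 # v3 # rest" and ne: "pre \<noteq> []" "rest \<noteq> []"
    and R: "R \<in> S" "path_comp E R" "R \<noteq> Q" "R' = R \<or> R' = rev R"
    and dR: "R' = ra @ u # w # rb" "ra \<noteq> []"
  shows "is_path V E R'" "set R' \<inter> set P = {}"
    "successively E pre" "E (last pre) x1" "E x1 v3" "E v3 (hd rest)" "successively E rest"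
    "successively E ra" "E (last ra) u" "E u w" "successively E (w # rb)"
    "hd P = hd pre" "last P = last rest" "hd R' = hd ra" "last R' = last (w # rb)"
    "distinct R'" "set R' \<subseteq> V" "distinct P" "set P \<subseteq> V"
proof -
  show pR: "is_path V E R'" using R pp_path[OF pp] by auto
  show "set R' \<inter> set P = {}" using otherP[OF R(1,3)] R(4) by auto
  have sP: "successively E (pre @ x1 # v3 # rest)" using pP dP by (simp add: is_path_iff)
  then show "successively E pre" "E (last pre) x1" "E x1 v3" "E v3 (hd rest)" "successively E rest"
    using ne by (simp_all add: successively_append_iff successively_Cons)
  have sR: "successively E (ra @ u # w # rb)" using pR dR by (simp add: is_path_iff)
  then show "successively E ra" "E (last ra) u" "E u w" "successively E (w # rb)"
    using dR by (simp_all add: successively_append_iff successively_Cons)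
  show "hd P = hd pre" "last P = last rest" "hd R' = hd ra" "last R' = last (w # rb)"
    using dP dR ne by auto
  show "distinct R'" "set R' \<subseteq> V" using pR by (auto simp: is_path_iff)
  show "distinct P" "set P \<subseteq> V" using pP by (auto simp: is_path_iff)
qed

lemma C1_far:
  assumes R: "R \<in> S" "path_comp E R" "R' = R \<or> R' = rev R"
    and dR: "R' = ra @ u # w # rb" and wz: "\<not> nbr R' w z" "z \<noteq> w" "z = last (w # rb)"
  shows "3 \<le> length (w # rb)"
proof -
  have "is_path V E R'" using R pp_path[OF pp] by auto
  then have "distinct R'" by (simp add: is_path_iff)
  then have "distinct ((ra @ [u]) @ w # rb)" using dR by simp
  then have "2 \<le> length rb" using far3[of "ra @ [u]" w rb z] wz dR by simp
  then show ?thesis by simp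
qed

lemma C1a:
  assumes dP: "P = pre @ x1 # v3 # rest" and ne: "pre \<noteq> []" "rest \<noteq> []"
    and R: "R \<in> S" "path_comp E R" "R \<noteq> Q" "R' = R \<or> R' = rev R"
    and dR: "R' = ra @ u # w # rb" "ra \<noteq> []"
    and vu: "E v3 u" and wz: "E w z" "z \<in> V1 E S" "z \<noteq> w" "\<not> nbr R' w z"
    and xe: "E x1 e" "e \<noteq> z"
    and Re: "Re \<in> S" "path_comp E Re" "Re \<noteq> Q" "Re \<noteq> R" "Re' = Re \<or> Re' = rev Re" "hd Re' = e"
  shows False
proof -
  note c = C1_common[OF dP ne R dR]
  have pRe: "is_path V E Re'" using Re pp_path[OF pp] by auto
  have dj: "set Re' \<inter> set P = {}" using otherP[OF Re(1,3)] Re(5) by auto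
  have djR: "set Re' \<inter> set R' = {}" using pp_disj[OF pp Re(1) R(1) Re(4)] Re(5) R(4) by auto
  have eRe: "(c = hd Re \<or> c = last Re) \<longleftrightarrow> (c = hd Re' \<or> c = last Re')" for c using ends_or[OF Re(5)] by blast
  have eR: "(c = hd R \<or> c = last R) \<longleftrightarrow> (c = hd R' \<or> c = last R')" for c using ends_or[OF R(4)] by blast
  have sRe: "successively E Re'" using pRe by (simp add: is_path_iff)
  define N1 where "N1 = w # rb"
  define N2 where "N2 = pre @ x1 # Re'"
  define N3 where "N3 = rev (v3 # rest) @ rev (ra @ [u])"
  have mk: "is_path V E N1 \<and> is_path V E N2 \<and> is_path V E N3 \<and> set N1 \<inter> set N2 = {}
     \<and> set N1 \<inter> set N3 = {} \<and> set N2 \<inter> set N3 = {} \<and> set N1 \<union> set N2 \<union> set N3 = set P \<union> set R' \<union> set Re'"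
    unfolding N1_def N2_def N3_def
  proof (rule mk3)
    show "mset (w # rb) + mset (pre @ x1 # Re') + mset (rev (v3 # rest) @ rev (ra @ [u])) = mset P + mset R' + mset Re'"
      by (simp add: dP dR)
    show "distinct (P @ R' @ Re')" using c pRe dj djR by (auto simp: is_path_iff)
    show "set Re' \<subseteq> V" using pRe by (auto simp: is_path_iff)
    show "successively E (pre @ x1 # Re')" using c xe sRe ne pRe Re(6)
      by (auto simp: successively_append_iff successively_Cons path_ne)
    show "successively E (rev (v3 # rest) @ rev (ra @ [u]))" using c vu ne dR
      by (auto simp: successively_append_iff successively_Cons hd_rev last_rev E_commute)
  qed (use c in auto)
  have h1: "hd N1 = w" "last N1 = last R'" using c unfolding N1_def by auto
  have h2: "hd N2 = hd P" "last N2 = last Re'" using pRe path_ne ne c unfolding N2_def by auto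
  have h3: "hd N3 = last P" "last N3 = hd R'" using ne dR c unfolding N3_def by (auto simp: hd_rev last_rev)
  have l1: "z = last N1 \<Longrightarrow> 3 \<le> length N1" using C1_far[OF R(1,2,4) dR(1) wz(4,3)] h1 unfolding N1_def by auto
  have un: "set N1 \<union> set N2 \<union> set N3 = set Q \<union> set R \<union> set Re" using mk setP Re(5) R(4) by auto
  show False
  proof (rule close3[OF QS R(1) Re(1) R(3)[symmetric] Re(3)[symmetric] Re(4)[symmetric] Qp R(2) Re(2), of N1 N2 N3 w z])
    show "\<forall>c. (c = hd Q \<or> c = last Q \<or> c = hd R \<or> c = last R \<or> c = hd Re \<or> c = last Re) \<longrightarrow> c = z \<longrightarrow>
       c = hd N2 \<or> c = last N2 \<or> c = hd N3 \<or> c = last N3 \<or> ((c = hd N1 \<or> c = last N1) \<and> 3 \<le> length N1)"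
    proof (intro allI impI)
      fix c assume cc: "c = hd Q \<or> c = last Q \<or> c = hd R \<or> c = last R \<or> c = hd Re \<or> c = last Re" "c = z"
      from cc endsQ eR eRe have "c = hd P \<or> c = last P \<or> c = hd R' \<or> c = last R' \<or> c = hd Re' \<or> c = last Re'" by blast
      then show "c = hd N2 \<or> c = last N2 \<or> c = hd N3 \<or> c = last N3 \<or> ((c = hd N1 \<or> c = last N1) \<and> 3 \<le> length N1)"
        using h1 h2 h3 l1 Re(6) xe cc(2) by auto
    qed
  qed (use mk wz h1 un in auto)
qed

lemma C1b:
  assumes dP: "P = pre @ x1 # v3 # rest" and ne: "pre \<noteq> []" "rest \<noteq> []"
    and R: "R \<in> S" "path_comp E R" "R \<noteq> Q" "R' = R \<or> R' = rev R"
    and dR: "R' = ra @ u # w # rb" "ra \<noteq> []"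
    and vu: "E v3 u" and wz: "E w z" "z \<in> V1 E S" "z \<noteq> w" "\<not> nbr R' w z"
    and xe: "E x1 (last P)" "last P \<noteq> z"
  shows False
proof -
  note c = C1_common[OF dP ne R dR]
  have eR: "(c = hd R \<or> c = last R) \<longleftrightarrow> (c = hd R' \<or> c = last R')" for c using ends_or[OF R(4)] by blast
  define N1 where "N1 = w # rb"
  define N2 where "N2 = pre @ x1 # rev (v3 # rest) @ rev (ra @ [u])"
  have mk: "is_path V E N1 \<and> is_path V E N2 \<and> set N1 \<inter> set N2 = {} \<and> set N1 \<union> set N2 = set P \<union> set R'"
    unfolding N1_def N2_def
  proof (rule mk2)
    show "mset (w # rb) + mset (pre @ x1 # rev (v3 # rest) @ rev (ra @ [u])) = mset P + mset R'"
      by (simp add: dP dR)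
    show "distinct (P @ R')" using c by (auto simp: is_path_iff)
    show "successively E (pre @ x1 # rev (v3 # rest) @ rev (ra @ [u]))" using c vu ne dR xe
      by (auto simp: successively_append_iff successively_Cons hd_rev last_rev E_commute)
  qed (use c in auto)
  have h1: "hd N1 = w" "last N1 = last R'" using c unfolding N1_def by auto
  have h2: "hd N2 = hd P" "last N2 = hd R'" using ne c dR unfolding N2_def by (auto simp: last_rev)
  have l1: "z = last N1 \<Longrightarrow> 3 \<le> length N1" using C1_far[OF R(1,2,4) dR(1) wz(4,3)] h1 unfolding N1_def by auto
  have un: "set N1 \<union> set N2 = set Q \<union> set R" using mk setP R(4) by auto
  show False
  proof (rule close2[OF QS R(1) R(3)[symmetric] Qp R(2), of N1 N2 w z])
    show "\<forall>c. (c = hd Q \<or> c = last Q \<or> c = hd R \<or> c = last R) \<longrightarrow> c = z \<longrightarrow>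
       c = hd N2 \<or> c = last N2 \<or> ((c = hd N1 \<or> c = last N1) \<and> 3 \<le> length N1)"
    proof (intro allI impI)
      fix c assume cc: "c = hd Q \<or> c = last Q \<or> c = hd R \<or> c = last R" "c = z"
      from cc endsQ eR have "c = hd P \<or> c = last P \<or> c = hd R' \<or> c = last R'" by blast
      then show "c = hd N2 \<or> c = last N2 \<or> ((c = hd N1 \<or> c = last N1) \<and> 3 \<le> length N1)"
        using h1 h2 l1 xe cc(2) by auto
    qed
  qed (use mk wz h1 un in auto)
qed

lemma C1c:
  assumes dP: "P = pre @ x1 # v3 # rest" and ne: "pre \<noteq> []" "rest \<noteq> []"
    and R: "R \<in> S" "path_comp E R" "R \<noteq> Q" "R' = R \<or> R' = rev R"
    and dR: "R' = ra @ u # w # rb" "ra \<noteq> []"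
    and vu: "E v3 u" and wz: "E w z" "z \<in> V1 E S" "z \<noteq> w" "\<not> nbr R' w z"
    and xe: "E x1 (hd R')" "hd R' \<noteq> z"
  shows False
proof -
  note c = C1_common[OF dP ne R dR]
  have eR: "(c = hd R \<or> c = last R) \<longleftrightarrow> (c = hd R' \<or> c = last R')" for c using ends_or[OF R(4)] by blast
  define N1 where "N1 = w # rb"
  define N2 where "N2 = pre @ x1 # ra @ u # v3 # rest"
  have mk: "is_path V E N1 \<and> is_path V E N2 \<and> set N1 \<inter> set N2 = {} \<and> set N1 \<union> set N2 = set P \<union> set R'"
    unfolding N1_def N2_def
  proof (rule mk2)
    show "mset (w # rb) + mset (pre @ x1 # ra @ u # v3 # rest) = mset P + mset R'"
      by (simp add: dP dR)
    show "distinct (P @ R')" using c by (auto simp: is_path_iff)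
    show "successively E (pre @ x1 # ra @ u # v3 # rest)" using c vu ne dR xe
      by (auto simp: successively_append_iff successively_Cons E_commute)
  qed (use c in auto)
  have h1: "hd N1 = w" "last N1 = last R'" using c unfolding N1_def by auto
  have h2: "hd N2 = hd P" "last N2 = last P" using ne c dR unfolding N2_def by auto
  have l1: "z = last N1 \<Longrightarrow> 3 \<le> length N1" using C1_far[OF R(1,2,4) dR(1) wz(4,3)] h1 unfolding N1_def by auto
  have un: "set N1 \<union> set N2 = set Q \<union> set R" using mk setP R(4) by auto
  show False
  proof (rule close2[OF QS R(1) R(3)[symmetric] Qp R(2), of N1 N2 w z])
    show "\<forall>c. (c = hd Q \<or> c = last Q \<or> c = hd R \<or> c = last R) \<longrightarrow> c = z \<longrightarrow>
       c = hd N2 \<or> c = last N2 \<or> ((c = hd N1 \<or> c = last N1) \<and> 3 \<le> length N1)"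
    proof (intro allI impI)
      fix c assume cc: "c = hd Q \<or> c = last Q \<or> c = hd R \<or> c = last R" "c = z"
      from cc endsQ eR have "c = hd P \<or> c = last P \<or> c = hd R' \<or> c = last R'" by blast
      then show "c = hd N2 \<or> c = last N2 \<or> ((c = hd N1 \<or> c = last N1) \<and> 3 \<le> length N1)"
        using h1 h2 l1 xe cc(2) by auto
    qed
  qed (use mk wz h1 un in auto)
qed

lemma C1d:
  assumes dP: "P = pre @ x1 # v3 # rest" and ne: "pre \<noteq> []" "rest \<noteq> []"
    and R: "R \<in> S" "path_comp E R" "R \<noteq> Q" "R' = R \<or> R' = rev R"
    and dR: "R' = ra @ u # w # rb" "ra \<noteq> []"
    and vu: "E v3 u" and wz: "E w z" "z \<in> V1 E S" "z \<noteq> w"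
    and xe: "E x1 (last R')" "last R' \<noteq> z"
  shows False
proof -
  note c = C1_common[OF dP ne R dR]
  have eR: "(c = hd R \<or> c = last R) \<longleftrightarrow> (c = hd R' \<or> c = last R')" for c using ends_or[OF R(4)] by blast
  define N1 where "N1 = pre @ x1 # rev (w # rb)"
  define N2 where "N2 = rev (v3 # rest) @ rev (ra @ [u])"
  have mk: "is_path V E N1 \<and> is_path V E N2 \<and> set N1 \<inter> set N2 = {} \<and> set N1 \<union> set N2 = set P \<union> set R'"
    unfolding N1_def N2_def
  proof (rule mk2)
    show "mset (pre @ x1 # rev (w # rb)) + mset (rev (v3 # rest) @ rev (ra @ [u])) = mset P + mset R'"
      by (simp add: dP dR)
    show "distinct (P @ R')" using c by (auto simp: is_path_iff)
    show "successively E (pre @ x1 # rev (w # rb))" using c ne xe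
      by (auto simp: successively_append_iff successively_Cons hd_rev last_rev hd_append E_commute)
    show "successively E (rev (v3 # rest) @ rev (ra @ [u]))" using c vu ne dR
      by (auto simp: successively_append_iff successively_Cons hd_rev last_rev E_commute)
  qed (use c in auto)
  have h1: "hd N1 = hd P" "last N1 = w" "3 \<le> length N1" using c ne unfolding N1_def by (auto simp: last_rev Suc_le_eq)
  have h2: "hd N2 = last P" "last N2 = hd R'" using ne c dR unfolding N2_def by (auto simp: hd_rev last_rev)
  have un: "set N1 \<union> set N2 = set Q \<union> set R" using mk setP R(4) by auto
  show False
  proof (rule close2[OF QS R(1) R(3)[symmetric] Qp R(2), of N1 N2 w z])
    show "\<forall>c. (c = hd Q \<or> c = last Q \<or> c = hd R \<or> c = last R) \<longrightarrow> c = z \<longrightarrow>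
       c = hd N2 \<or> c = last N2 \<or> ((c = hd N1 \<or> c = last N1) \<and> 3 \<le> length N1)"
    proof (intro allI impI)
      fix c assume cc: "c = hd Q \<or> c = last Q \<or> c = hd R \<or> c = last R" "c = z"
      from cc endsQ eR have "c = hd P \<or> c = last P \<or> c = hd R' \<or> c = last R'" by blast
      then show "c = hd N2 \<or> c = last N2 \<or> ((c = hd N1 \<or> c = last N1) \<and> 3 \<le> length N1)"
        using h1 h2 xe cc(2) by auto
    qed
  qed (use mk wz h1 un in auto)
qed

end


context ctxP begin

lemma C2a_o2:
  assumes dec: "P = pre @ x1 # v3 # mid @ u # m2" and ne: "pre \<noteq> []" "mid \<noteq> []" "m2 \<noteq> []"
    and vu: "E v3 u" and wz: "E (last mid) z" "z \<in> V1 E S" "z \<noteq> last mid"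
    and xe: "E x1 (last P)" "last P \<noteq> z"
  shows False
proof -
  have sP: "successively E (pre @ x1 # v3 # mid @ u # m2)" using pP dec by (simp add: is_path_iff)
  then have s: "successively E pre" "E (last pre) x1" "E x1 v3" "E v3 (hd mid)" "successively E mid"
     "E (last mid) u" "E u (hd m2)" "successively E m2"
    using ne by (simp_all add: successively_append_iff successively_Cons)
  have hP: "hd P = hd pre" "last P = last m2" using dec ne by auto
  define N1 where "N1 = pre @ x1 # rev (u # m2) @ v3 # mid"
  have mk: "is_path V E N1 \<and> set N1 = set P"
    unfolding N1_def
  proof (rule mk1)
    show "mset (pre @ x1 # rev (u # m2) @ v3 # mid) = mset P" by (simp add: dec)
    show "distinct P" "set P \<subseteq> V" using pP by (auto simp: is_path_iff)
    show "successively E (pre @ x1 # rev (u # m2) @ v3 # mid)" using s vu ne xe hP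
      by (auto simp: successively_append_iff successively_Cons hd_rev last_rev hd_append E_commute)
  qed auto
  have h1: "hd N1 = hd P" "last N1 = last mid" "3 \<le> length N1" using ne hP unfolding N1_def by (auto simp: Suc_le_eq)
  show False
  proof (rule close1[OF QS Qp, of N1 "last mid" z])
    show "\<forall>c. (c = hd Q \<or> c = last Q) \<longrightarrow> c = z \<longrightarrow> ((c = hd N1 \<or> c = last N1) \<and> 3 \<le> length N1)"
    proof (intro allI impI)
      fix c assume cc: "c = hd Q \<or> c = last Q" "c = z"
      then have "c = hd P \<or> c = last P" using endsQ by blast
      then show "(c = hd N1 \<or> c = last N1) \<and> 3 \<le> length N1" using h1 xe cc(2) by auto
    qed
  qed (use mk wz h1 setP in auto)
qed

lemma C2b_common:
  assumes dec: "P = q1 @ u # qx @ v3 # rest" and ne: "q1 \<noteq> []" "qx \<noteq> []" "rest \<noteq> []"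
  shows "successively E q1" "E (last q1) u" "E u (hd qx)" "successively E qx" "E (last qx) v3"
     "E v3 (hd rest)" "successively E rest" "hd P = hd q1" "last P = last rest" "distinct P" "set P \<subseteq> V"
proof -
  have sP: "successively E (q1 @ u # qx @ v3 # rest)" using pP dec by (simp add: is_path_iff)
  then show "successively E q1" "E (last q1) u" "E u (hd qx)" "successively E qx" "E (last qx) v3"
     "E v3 (hd rest)" "successively E rest"
    using ne by (simp_all add: successively_append_iff successively_Cons)
  show "hd P = hd q1" "last P = last rest" using dec ne by auto
  show "distinct P" "set P \<subseteq> V" using pP by (auto simp: is_path_iff)
qed

lemma C2b_plus_ext:
  assumes dec: "P = q1 @ u # qx @ v3 # rest" and ne: "q1 \<noteq> []" "qx \<noteq> []" "rest \<noteq> []"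
    and vu: "E v3 u" and wz: "E (hd qx) z" "z \<in> V1 E S" "z \<noteq> hd qx"
    and Re: "Re \<in> S" "path_comp E Re" "Re \<noteq> Q" "Re' = Re \<or> Re' = rev Re" "hd Re' = e"
    and xe: "E (last qx) e" "e \<noteq> z"
  shows False
proof -
  note c = C2b_common[OF dec ne]
  have pRe: "is_path V E Re'" using Re pp_path[OF pp] by auto
  have dj: "set Re' \<inter> set P = {}" using otherP[OF Re(1,3)] Re(4) by auto
  have eR: "(c = hd Re \<or> c = last Re) \<longleftrightarrow> (c = hd Re' \<or> c = last Re')" for c using ends_or[OF Re(4)] by blast
  have lR: "2 \<le> length Re'" using comp_len[OF Re(1,2)] Re(4) by auto
  have sR: "successively E Re'" using pRe by (simp add: is_path_iff)
  define N1 where "N1 = qx @ Re'"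
  define N2 where "N2 = rev (v3 # rest) @ u # rev q1"
  have mk: "is_path V E N1 \<and> is_path V E N2 \<and> set N1 \<inter> set N2 = {} \<and> set N1 \<union> set N2 = set P \<union> set Re'"
    unfolding N1_def N2_def
  proof (rule mk2)
    show "mset (qx @ Re') + mset (rev (v3 # rest) @ u # rev q1) = mset P + mset Re'" by (simp add: dec)
    show "distinct (P @ Re')" using c pRe dj by (auto simp: is_path_iff)
    show "set Re' \<subseteq> V" using pRe by (auto simp: is_path_iff)
    show "successively E (qx @ Re')" using c xe sR ne pRe Re(5)
      by (auto simp: successively_append_iff successively_Cons path_ne)
    show "successively E (rev (v3 # rest) @ u # rev q1)" using c vu ne
      by (auto simp: successively_append_iff successively_Cons hd_rev last_rev E_commute)
  qed (use c ne in auto)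
  have Rne: "Re' \<noteq> []" using pRe path_ne by blast
  have lq: "1 \<le> length qx" using ne(2) by (cases qx) auto
  have h1: "hd N1 = hd qx" "last N1 = last Re'" "3 \<le> length N1" using ne lR Rne lq unfolding N1_def by auto
  have h2: "hd N2 = last P" "last N2 = hd P" using ne c unfolding N2_def by (auto simp: hd_rev last_rev)
  have un: "set N1 \<union> set N2 = set Q \<union> set Re" using mk setP Re(4) by auto
  show False
  proof (rule close2[OF QS Re(1) Re(3)[symmetric] Qp Re(2), of N1 N2 "hd qx" z])
    show "\<forall>c. (c = hd Q \<or> c = last Q \<or> c = hd Re \<or> c = last Re) \<longrightarrow> c = z \<longrightarrow>
       c = hd N2 \<or> c = last N2 \<or> ((c = hd N1 \<or> c = last N1) \<and> 3 \<le> length N1)"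
    proof (intro allI impI)
      fix c assume cc: "c = hd Q \<or> c = last Q \<or> c = hd Re \<or> c = last Re" "c = z"
      from cc endsQ eR have "c = hd P \<or> c = last P \<or> c = hd Re' \<or> c = last Re'" by blast
      then show "c = hd N2 \<or> c = last N2 \<or> ((c = hd N1 \<or> c = last N1) \<and> 3 \<le> length N1)"
        using h1 h2 Re(5) xe cc(2) by auto
    qed
  qed (use mk wz h1 un in auto)
qed

lemma C2b_plus_o2:
  assumes dec: "P = q1 @ u # qx @ v3 # rest" and ne: "q1 \<noteq> []" "qx \<noteq> []" "rest \<noteq> []"
    and vu: "E v3 u" and wz: "E (hd qx) z" "z \<in> V1 E S" "z \<noteq> hd qx"
    and xe: "E (last qx) (last P)" "last P \<noteq> z"
  shows False
proof -
  note c = C2b_common[OF dec ne]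
  define N1 where "N1 = q1 @ u # v3 # rest @ rev qx"
  have mk: "is_path V E N1 \<and> set N1 = set P"
    unfolding N1_def
  proof (rule mk1)
    show "mset (q1 @ u # v3 # rest @ rev qx) = mset P" by (simp add: dec)
    show "successively E (q1 @ u # v3 # rest @ rev qx)" using c vu ne xe
      by (auto simp: successively_append_iff successively_Cons hd_rev last_rev E_commute)
  qed (use c in auto)
  have h1: "hd N1 = hd P" "last N1 = hd qx" "3 \<le> length N1" using ne c unfolding N1_def by (auto simp: last_rev Suc_le_eq)
  show False
  proof (rule close1[OF QS Qp, of N1 "hd qx" z])
    show "\<forall>c. (c = hd Q \<or> c = last Q) \<longrightarrow> c = z \<longrightarrow> ((c = hd N1 \<or> c = last N1) \<and> 3 \<le> length N1)"
    proof (intro allI impI)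
      fix c assume cc: "c = hd Q \<or> c = last Q" "c = z"
      then have "c = hd P \<or> c = last P" using endsQ by blast
      then show "(c = hd N1 \<or> c = last N1) \<and> 3 \<le> length N1" using h1 xe cc(2) by auto
    qed
  qed (use mk wz h1 setP in auto)
qed

lemma C2b_minus_ext:
  assumes dec: "P = q1 @ u # qx @ v3 # rest" and ne: "q1 \<noteq> []" "qx \<noteq> []" "rest \<noteq> []"
    and vu: "E v3 u" and wz: "E (last q1) z" "z \<in> V1 E S" "z \<noteq> last q1" "\<not> nbr P (last q1) z"
    and Re: "Re \<in> S" "path_comp E Re" "Re \<noteq> Q" "Re' = Re \<or> Re' = rev Re" "hd Re' = e"
    and xe: "E (last qx) e" "e \<noteq> z"
  shows False
proof -
  note c = C2b_common[OF dec ne]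
  have pRe: "is_path V E Re'" using Re pp_path[OF pp] by auto
  have dj: "set Re' \<inter> set P = {}" using otherP[OF Re(1,3)] Re(4) by auto
  have eR: "(c = hd Re \<or> c = last Re) \<longleftrightarrow> (c = hd Re' \<or> c = last Re')" for c using ends_or[OF Re(4)] by blast
  have sR: "successively E Re'" using pRe by (simp add: is_path_iff)
  define N1 where "N1 = q1"
  define N2 where "N2 = rev (v3 # rest) @ u # qx @ Re'"
  have mk: "is_path V E N1 \<and> is_path V E N2 \<and> set N1 \<inter> set N2 = {} \<and> set N1 \<union> set N2 = set P \<union> set Re'"
    unfolding N1_def N2_def
  proof (rule mk2)
    show "mset q1 + mset (rev (v3 # rest) @ u # qx @ Re') = mset P + mset Re'" by (simp add: dec)
    show "distinct (P @ Re')" using c pRe dj by (auto simp: is_path_iff)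
    show "set Re' \<subseteq> V" using pRe by (auto simp: is_path_iff)
    show "successively E (rev (v3 # rest) @ u # qx @ Re')" using c vu ne xe sR pRe Re(5)
      by (auto simp: successively_append_iff successively_Cons hd_rev last_rev path_ne E_commute)
  qed (use c ne in auto)
  have h1: "hd N1 = hd P" "last N1 = last q1" using c unfolding N1_def by auto
  have l1: "3 \<le> length N1" if "z = hd P"
  proof -
    obtain q1' a where q: "q1 = q1' @ [a]" using ne by (metis rev_exhaust)
    have Pq: "P = q1' @ a # (u # qx @ v3 # rest)" using dec q by simp
    have d: "distinct (q1' @ a # (u # qx @ v3 # rest))" using c(10) Pq by simp
    have "\<not> nbr (q1' @ a # (u # qx @ v3 # rest)) a z" using wz(4) Pq q by simp
    moreover have "z = hd (q1' @ [a])" using that c q by simp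
    moreover have "z \<noteq> a" using wz(3) q by simp
    ultimately have "2 \<le> length q1'" using near3[OF d] by blast
    then show ?thesis unfolding N1_def using q by simp
  qed
  have h2: "hd N2 = last P" "last N2 = last Re'" using ne c pRe path_ne unfolding N2_def by (auto simp: hd_rev)
  have un: "set N1 \<union> set N2 = set Q \<union> set Re" using mk setP Re(4) by auto
  show False
  proof (rule close2[OF QS Re(1) Re(3)[symmetric] Qp Re(2), of N1 N2 "last q1" z])
    show "\<forall>c. (c = hd Q \<or> c = last Q \<or> c = hd Re \<or> c = last Re) \<longrightarrow> c = z \<longrightarrow>
       c = hd N2 \<or> c = last N2 \<or> ((c = hd N1 \<or> c = last N1) \<and> 3 \<le> length N1)"
    proof (intro allI impI)
      fix c assume cc: "c = hd Q \<or> c = last Q \<or> c = hd Re \<or> c = last Re" "c = z"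
      from cc endsQ eR have "c = hd P \<or> c = last P \<or> c = hd Re' \<or> c = last Re'" by blast
      then show "c = hd N2 \<or> c = last N2 \<or> ((c = hd N1 \<or> c = last N1) \<and> 3 \<le> length N1)"
        using h1 h2 l1 Re(5) xe cc(2) by auto
    qed
  qed (use mk wz h1 un in auto)
qed

lemma C2b_minus_cyc:
  assumes dec: "P = q1 @ u # qx @ v3 # rest" and ne: "q1 \<noteq> []" "qx \<noteq> []" "rest \<noteq> []"
    and vu: "E v3 u" and wz: "E (last q1) z"
    and Rz: "Rz \<in> S" "path_comp E Rz" "Rz \<noteq> Q" "Rz' = Rz \<or> Rz' = rev Rz" "hd Rz' = z"
    and xe: "E (last qx) (last P)"
  shows False
proof -
  note c = C2b_common[OF dec ne]
  have pRz: "is_path V E Rz'" using Rz pp_path[OF pp] by auto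
  have dj: "set Rz' \<inter> set P = {}" using otherP[OF Rz(1,3)] Rz(4) by auto
  have sR: "successively E Rz'" using pRz by (simp add: is_path_iff)
  define N1 where "N1 = rev (u # qx) @ v3 # rest"
  define N2 where "N2 = rev Rz' @ rev q1"
  have mk: "is_path V E N1 \<and> is_path V E N2 \<and> set N1 \<inter> set N2 = {} \<and> set N1 \<union> set N2 = set P \<union> set Rz'"
    unfolding N1_def N2_def
  proof (rule mk2)
    show "mset (rev (u # qx) @ v3 # rest) + mset (rev Rz' @ rev q1) = mset P + mset Rz'" by (simp add: dec)
    show "distinct (P @ Rz')" using c pRz dj by (auto simp: is_path_iff)
    show "set Rz' \<subseteq> V" using pRz by (auto simp: is_path_iff)
    show "successively E (rev (u # qx) @ v3 # rest)" using c vu ne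
      by (auto simp: successively_append_iff successively_Cons hd_rev last_rev E_commute)
    show "successively E (rev Rz' @ rev q1)" using c ne sR pRz Rz(5) wz
      by (auto simp: successively_append_iff successively_Cons hd_rev last_rev path_ne E_commute)
  qed (use c ne pRz path_ne in auto)
  have h1: "hd N1 = last qx" "last N1 = last P" "3 \<le> length N1" using ne c unfolding N1_def by (auto simp: hd_rev Suc_le_eq)
  have un: "set N1 \<union> set N2 = set Q \<union> set Rz" using mk setP Rz(4) by auto
  show False
    by (rule cyc2[OF QS Rz(1) Rz(3)[symmetric] Qp Rz(2), of N1 N2]) (use mk un h1 xe in auto)
qed

end


context ctxP begin

lemma C2a_ext:
  assumes dec: "P = pre @ x1 # v3 # mid @ u # m2" and ne: "pre \<noteq> []" "mid \<noteq> []" "m2 \<noteq> []"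
    and vu: "E v3 u" and wz: "E (last mid) z" "z \<in> V1 E S" "z \<noteq> last mid"
    and Re: "Re \<in> S" "path_comp E Re" "Re \<noteq> Q" "Re' = Re \<or> Re' = rev Re" "hd Re' = e"
    and xe: "E x1 e" "e \<noteq> z"
  shows False
proof -
  have pRe: "is_path V E Re'" using Re pp_path[OF pp] by auto
  have dj: "set Re' \<inter> set P = {}" using otherP[OF Re(1,3)] Re(4) by auto
  have eR: "(c = hd Re \<or> c = last Re) \<longleftrightarrow> (c = hd Re' \<or> c = last Re')" for c using ends_or[OF Re(4)] by blast
  have lR: "2 \<le> length Re'" using comp_len[OF Re(1,2)] Re(4) by auto
  have sP: "successively E (pre @ x1 # v3 # mid @ u # m2)" using pP dec by (simp add: is_path_iff)
  then have s: "successively E pre" "E (last pre) x1" "E x1 v3" "E v3 (hd mid)" "successively E mid"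
     "E (last mid) u" "E u (hd m2)" "successively E m2"
    using ne by (simp_all add: successively_append_iff successively_Cons)
  have sR: "successively E Re'" using pRe by (simp add: is_path_iff)
  define N1 where "N1 = rev (v3 # mid) @ u # m2"
  define N2 where "N2 = pre @ x1 # Re'"
  have mk: "is_path V E N1 \<and> is_path V E N2 \<and> set N1 \<inter> set N2 = {} \<and> set N1 \<union> set N2 = set P \<union> set Re'"
    unfolding N1_def N2_def
  proof (rule mk2)
    show "mset (rev (v3 # mid) @ u # m2) + mset (pre @ x1 # Re') = mset P + mset Re'" by (simp add: dec)
    show "distinct (P @ Re')" using pP pRe dj by (auto simp: is_path_iff)
    show "set P \<subseteq> V" "set Re' \<subseteq> V" using pP pRe by (auto simp: is_path_iff)
    show "successively E (rev (v3 # mid) @ u # m2)" using s vu ne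
      by (auto simp: successively_append_iff successively_Cons hd_rev last_rev E_commute)
    show "successively E (pre @ x1 # Re')" using s xe sR ne pRe Re(5)
      by (auto simp: successively_append_iff successively_Cons path_ne)
  qed auto
  have h1: "hd N1 = last mid" "last N1 = last m2" "3 \<le> length N1"
    using ne unfolding N1_def by (auto simp: hd_rev Suc_le_eq)
  have h2: "hd N2 = hd pre" "last N2 = last Re'" using pRe path_ne ne unfolding N2_def by auto
  have hP: "hd P = hd pre" "last P = last m2" using dec ne by auto
  have un: "set N1 \<union> set N2 = set Q \<union> set Re" using mk setP Re(4) by auto
  show False
  proof (rule close2[OF QS Re(1) Re(3)[symmetric] Qp Re(2), of N1 N2 "last mid" z])
    show "\<forall>c. (c = hd Q \<or> c = last Q \<or> c = hd Re \<or> c = last Re) \<longrightarrow> c = z \<longrightarrow>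
       c = hd N2 \<or> c = last N2 \<or> ((c = hd N1 \<or> c = last N1) \<and> 3 \<le> length N1)"
    proof (intro allI impI)
      fix c assume c: "c = hd Q \<or> c = last Q \<or> c = hd Re \<or> c = last Re" "c = z"
      from c endsQ eR have "c = hd P \<or> c = last P \<or> c = hd Re' \<or> c = last Re'" by blast
      then show "c = hd N2 \<or> c = last N2 \<or> ((c = hd N1 \<or> c = last N1) \<and> 3 \<le> length N1)"
        using hP h1 h2 Re(5) xe c(2) by auto
    qed
  qed (use mk wz h1 un in auto)
qed

end


context ctxP begin

lemma C4_common:
  assumes dec: "P = pre @ x1 # v3 # mid @ u # x2 # m3" and ne: "pre \<noteq> []" "mid \<noteq> []"
  shows "successively E pre" "E (last pre) x1" "E x1 v3" "E v3 (hd mid)" "successively E mid"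
     "E (last mid) u" "E u x2" "successively E (x2 # m3)" "hd P = hd pre" "last P = last (x2 # m3)"
     "distinct P" "set P \<subseteq> V"
proof -
  have sP: "successively E (pre @ x1 # v3 # mid @ u # x2 # m3)" using pP dec by (simp add: is_path_iff)
  then show "successively E pre" "E (last pre) x1" "E x1 v3" "E v3 (hd mid)" "successively E mid"
     "E (last mid) u" "E u x2" "successively E (x2 # m3)"
    using ne by (simp_all add: successively_append_iff successively_Cons)
  show "hd P = hd pre" "last P = last (x2 # m3)" using dec ne by auto
  show "distinct P" "set P \<subseteq> V" using pP by (auto simp: is_path_iff)
qed

lemma C4_far:
  assumes dec: "P = pre @ x1 # v3 # mid @ u # x2 # m3" and z: "\<not> nbr P x2 z" "z \<noteq> x2" "z = last P"
  shows "3 \<le> length (x2 # m3)"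
proof -
  have d: "distinct ((pre @ x1 # v3 # mid @ [u]) @ x2 # m3)" using pP dec by (simp add: is_path_iff)
  have "\<not> nbr ((pre @ x1 # v3 # mid @ [u]) @ x2 # m3) x2 z" using z dec by simp
  moreover have "z = last (x2 # m3)" using z dec by simp
  ultimately have "2 \<le> length m3" using far3[OF d] z(2) by blast
  then show ?thesis by simp
qed

lemma C4_extA:
  assumes dec: "P = pre @ x1 # v3 # mid @ u # x2 # m3" and ne: "pre \<noteq> []" "mid \<noteq> []"
    and vu: "E v3 u" and xf: "E x2 f"
    and tz: "E (hd mid) t" "t \<in> V1 E S" "t \<noteq> hd mid" "t \<noteq> f"
    and Rf: "Rf \<in> S" "path_comp E Rf" "Rf \<noteq> Q" "Rf' = Rf \<or> Rf' = rev Rf" "hd Rf' = f"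
  shows False
proof -
  note c = C4_common[OF dec ne]
  have pR: "is_path V E Rf'" using Rf pp_path[OF pp] by auto
  have Rne: "Rf' \<noteq> []" using pR path_ne by blast
  have dj: "set Rf' \<inter> set P = {}" using otherP[OF Rf(1,3)] Rf(4) by auto
  have eR: "(c = hd Rf \<or> c = last Rf) \<longleftrightarrow> (c = hd Rf' \<or> c = last Rf')" for c using ends_or[OF Rf(4)] by blast
  have sR: "successively E Rf'" using pR by (simp add: is_path_iff)
  define N1 where "N1 = pre @ x1 # v3 # u # rev mid"
  define N2 where "N2 = rev (x2 # m3) @ Rf'"
  have mk: "is_path V E N1 \<and> is_path V E N2 \<and> set N1 \<inter> set N2 = {} \<and> set N1 \<union> set N2 = set P \<union> set Rf'"
    unfolding N1_def N2_def
  proof (rule mk2)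
    show "mset (pre @ x1 # v3 # u # rev mid) + mset (rev (x2 # m3) @ Rf') = mset P + mset Rf'" by (simp add: dec)
    show "distinct (P @ Rf')" using c pR dj by (auto simp: is_path_iff)
    show "set Rf' \<subseteq> V" using pR by (auto simp: is_path_iff)
    show "successively E (pre @ x1 # v3 # u # rev mid)" using c vu ne
      by (auto simp: successively_append_iff successively_Cons hd_rev last_rev E_commute)
    show "successively E (rev (x2 # m3) @ Rf')" using c xf sR Rne Rf(5)
      by (auto simp: successively_append_iff successively_Cons hd_rev last_rev E_commute)
  qed (use c ne Rne in auto)
  have h1: "hd N1 = hd P" "last N1 = hd mid" "3 \<le> length N1" using ne c unfolding N1_def by (auto simp: last_rev)
  have h2: "hd N2 = last P" "last N2 = last Rf'" using Rne c unfolding N2_def by (auto simp: hd_rev)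
  have un: "set N1 \<union> set N2 = set Q \<union> set Rf" using mk setP Rf(4) by auto
  show False
  proof (rule close2[OF QS Rf(1) Rf(3)[symmetric] Qp Rf(2), of N1 N2 "hd mid" t])
    show "\<forall>c. (c = hd Q \<or> c = last Q \<or> c = hd Rf \<or> c = last Rf) \<longrightarrow> c = t \<longrightarrow>
       c = hd N2 \<or> c = last N2 \<or> ((c = hd N1 \<or> c = last N1) \<and> 3 \<le> length N1)"
    proof (intro allI impI)
      fix c assume cc: "c = hd Q \<or> c = last Q \<or> c = hd Rf \<or> c = last Rf" "c = t"
      from cc endsQ eR have "c = hd P \<or> c = last P \<or> c = hd Rf' \<or> c = last Rf'" by blast
      then show "c = hd N2 \<or> c = last N2 \<or> ((c = hd N1 \<or> c = last N1) \<and> 3 \<le> length N1)"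
        using h1 h2 Rf(5) tz cc(2) by auto
    qed
  qed (use mk tz h1 un in auto)
qed

lemma C4_extB:
  assumes dec: "P = pre @ x1 # v3 # mid @ u # x2 # m3" and ne: "pre \<noteq> []" "mid \<noteq> []"
    and vu: "E v3 u" and yf: "E (hd mid) f"
    and wz: "E x2 z" "z \<in> V1 E S" "z \<noteq> x2" "z \<noteq> f" "\<not> nbr P x2 z"
    and Rf: "Rf \<in> S" "path_comp E Rf" "Rf \<noteq> Q" "Rf' = Rf \<or> Rf' = rev Rf" "hd Rf' = f"
  shows False
proof -
  note c = C4_common[OF dec ne]
  have pR: "is_path V E Rf'" using Rf pp_path[OF pp] by auto
  have Rne: "Rf' \<noteq> []" using pR path_ne by blast
  have dj: "set Rf' \<inter> set P = {}" using otherP[OF Rf(1,3)] Rf(4) by auto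
  have eR: "(c = hd Rf \<or> c = last Rf) \<longleftrightarrow> (c = hd Rf' \<or> c = last Rf')" for c using ends_or[OF Rf(4)] by blast
  have sR: "successively E Rf'" using pR by (simp add: is_path_iff)
  define N1 where "N1 = x2 # m3"
  define N2 where "N2 = pre @ x1 # v3 # u # rev mid @ Rf'"
  have mk: "is_path V E N1 \<and> is_path V E N2 \<and> set N1 \<inter> set N2 = {} \<and> set N1 \<union> set N2 = set P \<union> set Rf'"
    unfolding N1_def N2_def
  proof (rule mk2)
    show "mset (x2 # m3) + mset (pre @ x1 # v3 # u # rev mid @ Rf') = mset P + mset Rf'" by (simp add: dec)
    show "distinct (P @ Rf')" using c pR dj by (auto simp: is_path_iff)
    show "set Rf' \<subseteq> V" using pR by (auto simp: is_path_iff)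
    show "successively E (pre @ x1 # v3 # u # rev mid @ Rf')" using c vu ne yf sR Rne Rf(5)
      by (auto simp: successively_append_iff successively_Cons hd_rev last_rev E_commute)
  qed (use c ne Rne in auto)
  have h1: "hd N1 = x2" "last N1 = last P" using c unfolding N1_def by auto
  have l1: "z = last P \<Longrightarrow> 3 \<le> length N1" using C4_far[OF dec wz(5,3)] unfolding N1_def by blast
  have h2: "hd N2 = hd P" "last N2 = last Rf'" using Rne c ne unfolding N2_def by auto
  have un: "set N1 \<union> set N2 = set Q \<union> set Rf" using mk setP Rf(4) by auto
  show False
  proof (rule close2[OF QS Rf(1) Rf(3)[symmetric] Qp Rf(2), of N1 N2 x2 z])
    show "\<forall>c. (c = hd Q \<or> c = last Q \<or> c = hd Rf \<or> c = last Rf) \<longrightarrow> c = z \<longrightarrow>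
       c = hd N2 \<or> c = last N2 \<or> ((c = hd N1 \<or> c = last N1) \<and> 3 \<le> length N1)"
    proof (intro allI impI)
      fix c assume cc: "c = hd Q \<or> c = last Q \<or> c = hd Rf \<or> c = last Rf" "c = z"
      from cc endsQ eR have "c = hd P \<or> c = last P \<or> c = hd Rf' \<or> c = last Rf'" by blast
      then show "c = hd N2 \<or> c = last N2 \<or> ((c = hd N1 \<or> c = last N1) \<and> 3 \<le> length N1)"
        using h1 h2 l1 Rf(5) wz cc(2) by auto
    qed
  qed (use mk wz h1 un in auto)
qed

lemma C4_o1A:
  assumes dec: "P = pre @ x1 # v3 # mid @ u # x2 # m3" and ne: "pre \<noteq> []" "mid \<noteq> []"
    and vu: "E v3 u" and yo: "E (hd mid) (hd P)" and xo: "E x2 (hd P)"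
    and tz: "E (hd mid) t" "t \<in> V1 E S" "t \<noteq> hd mid" "t \<noteq> hd P"
  shows False
proof -
  note c = C4_common[OF dec ne]
  define N1 where "N1 = rev (x2 # m3) @ pre @ x1 # v3 # u # rev mid"
  have mk: "is_path V E N1 \<and> set N1 = set P"
    unfolding N1_def
  proof (rule mk1)
    show "mset (rev (x2 # m3) @ pre @ x1 # v3 # u # rev mid) = mset P" by (simp add: dec)
    show "successively E (rev (x2 # m3) @ pre @ x1 # v3 # u # rev mid)" using c vu ne xo
      by (auto simp: successively_append_iff successively_Cons hd_rev last_rev E_commute)
  qed (use c in auto)
  have h1: "hd N1 = last P" "last N1 = hd mid" "3 \<le> length N1" using ne c unfolding N1_def by (auto simp: last_rev hd_rev)
  show False
  proof (rule close1[OF QS Qp, of N1 "hd mid" t])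
    show "\<forall>c. (c = hd Q \<or> c = last Q) \<longrightarrow> c = t \<longrightarrow> ((c = hd N1 \<or> c = last N1) \<and> 3 \<le> length N1)"
    proof (intro allI impI)
      fix c assume cc: "c = hd Q \<or> c = last Q" "c = t"
      then have "c = hd P \<or> c = last P" using endsQ by blast
      then show "(c = hd N1 \<or> c = last N1) \<and> 3 \<le> length N1" using h1 tz cc(2) by auto
    qed
  qed (use mk tz h1 setP in auto)
qed

lemma C4_o1B_ext:
  assumes dec: "P = pre @ x1 # v3 # mid @ u # x2 # m3" and ne: "pre \<noteq> []" "mid \<noteq> []"
    and vu: "E v3 u" and yo: "E (hd mid) (hd P)"
    and wz: "E x2 z" "z \<in> V1 E S" "z \<noteq> x2" "z \<noteq> hd P" "z \<noteq> e" "\<not> nbr P x2 z"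
    and Re: "Re \<in> S" "path_comp E Re" "Re \<noteq> Q" "Re' = Re \<or> Re' = rev Re" "hd Re' = e"
    and xe: "E x1 e"
  shows False
proof -
  note c = C4_common[OF dec ne]
  have pR: "is_path V E Re'" using Re pp_path[OF pp] by auto
  have Rne: "Re' \<noteq> []" using pR path_ne by blast
  have dj: "set Re' \<inter> set P = {}" using otherP[OF Re(1,3)] Re(4) by auto
  have eR: "(c = hd Re \<or> c = last Re) \<longleftrightarrow> (c = hd Re' \<or> c = last Re')" for c using ends_or[OF Re(4)] by blast
  have sR: "successively E Re'" using pR by (simp add: is_path_iff)
  define N1 where "N1 = x2 # m3"
  define N2 where "N2 = rev (pre @ x1 # Re') @ mid @ [u, v3]"
  have mk: "is_path V E N1 \<and> is_path V E N2 \<and> set N1 \<inter> set N2 = {} \<and> set N1 \<union> set N2 = set P \<union> set Re'"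
    unfolding N1_def N2_def
  proof (rule mk2)
    show "mset (x2 # m3) + mset (rev (pre @ x1 # Re') @ mid @ [u, v3]) = mset P + mset Re'" by (simp add: dec)
    show "distinct (P @ Re')" using c pR dj by (auto simp: is_path_iff)
    show "set Re' \<subseteq> V" using pR by (auto simp: is_path_iff)
    show "successively E (rev (pre @ x1 # Re') @ mid @ [u, v3])" using c vu ne yo sR Rne Re(5) xe
      by (auto simp: successively_append_iff successively_Cons hd_rev last_rev E_commute)
  qed (use c ne Rne in auto)
  have h1: "hd N1 = x2" "last N1 = last P" using c unfolding N1_def by auto
  have l1: "z = last P \<Longrightarrow> 3 \<le> length N1" using C4_far[OF dec wz(6,3)] unfolding N1_def by blast
  have h2: "hd N2 = last Re'" "last N2 = v3" using Rne c ne unfolding N2_def by (auto simp: hd_rev)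
  have un: "set N1 \<union> set N2 = set Q \<union> set Re" using mk setP Re(4) by auto
  show False
  proof (rule close2[OF QS Re(1) Re(3)[symmetric] Qp Re(2), of N1 N2 x2 z])
    show "\<forall>c. (c = hd Q \<or> c = last Q \<or> c = hd Re \<or> c = last Re) \<longrightarrow> c = z \<longrightarrow>
       c = hd N2 \<or> c = last N2 \<or> ((c = hd N1 \<or> c = last N1) \<and> 3 \<le> length N1)"
    proof (intro allI impI)
      fix c assume cc: "c = hd Q \<or> c = last Q \<or> c = hd Re \<or> c = last Re" "c = z"
      from cc endsQ eR have "c = hd P \<or> c = last P \<or> c = hd Re' \<or> c = last Re'" by blast
      then show "c = hd N2 \<or> c = last N2 \<or> ((c = hd N1 \<or> c = last N1) \<and> 3 \<le> length N1)"
        using h1 h2 l1 Re(5) wz cc(2) by auto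
    qed
  qed (use mk wz h1 un in auto)
qed

lemma C4_o1B_o2:
  assumes dec: "P = pre @ x1 # v3 # mid @ u # x2 # m3" and ne: "pre \<noteq> []" "mid \<noteq> []"
    and vu: "E v3 u" and yo: "E (hd mid) (hd P)" and xo: "E x1 (last P)"
    and wz: "E x2 z" "z \<in> V1 E S" "z \<noteq> x2" "z \<noteq> hd P" "z \<noteq> last P"
  shows False
proof -
  note c = C4_common[OF dec ne]
  define N1 where "N1 = (x2 # m3) @ rev (pre @ [x1]) @ mid @ [u, v3]"
  have mk: "is_path V E N1 \<and> set N1 = set P"
    unfolding N1_def
  proof (rule mk1)
    show "mset ((x2 # m3) @ rev (pre @ [x1]) @ mid @ [u, v3]) = mset P" by (simp add: dec)
    show "successively E ((x2 # m3) @ rev (pre @ [x1]) @ mid @ [u, v3])" using c vu ne xo yo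
      by (auto simp: successively_append_iff successively_Cons hd_rev last_rev E_commute hd_append split: if_splits)
  qed (use c in auto)
  have h1: "hd N1 = x2" unfolding N1_def by simp
  show False
  proof (rule close1[OF QS Qp, of N1 x2 z])
    show "\<forall>c. (c = hd Q \<or> c = last Q) \<longrightarrow> c = z \<longrightarrow> ((c = hd N1 \<or> c = last N1) \<and> 3 \<le> length N1)"
    proof (intro allI impI)
      fix c assume cc: "c = hd Q \<or> c = last Q" "c = z"
      then have "c = hd P \<or> c = last P" using endsQ by blast
      then show "(c = hd N1 \<or> c = last N1) \<and> 3 \<le> length N1" using wz cc(2) by auto
    qed
  qed (use mk wz h1 setP in auto)
qed

lemma C3:
  assumes dec: "P = pre @ x1 # v3 # mid @ u # x2 # m3" and ne: "pre \<noteq> []" "mid \<noteq> []"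
    and vu: "E v3 u" and yo: "E (hd mid) (last P)"
    and tz: "E x2 t" "t \<in> V1 E S" "t \<noteq> x2" "t \<noteq> last P"
  shows False
proof -
  note c = C4_common[OF dec ne]
  define N1 where "N1 = pre @ x1 # v3 # u # rev mid @ rev (x2 # m3)"
  have mk: "is_path V E N1 \<and> set N1 = set P"
    unfolding N1_def
  proof (rule mk1)
    show "mset (pre @ x1 # v3 # u # rev mid @ rev (x2 # m3)) = mset P" by (simp add: dec)
    show "successively E (pre @ x1 # v3 # u # rev mid @ rev (x2 # m3))" using c vu ne yo
      by (auto simp: successively_append_iff successively_Cons hd_rev last_rev E_commute hd_append split: if_splits)
  qed (use c in auto)
  have h1: "hd N1 = hd P" "last N1 = x2" "3 \<le> length N1" using ne c unfolding N1_def by (auto simp: last_rev)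
  show False
  proof (rule close1[OF QS Qp, of N1 x2 t])
    show "\<forall>c. (c = hd Q \<or> c = last Q) \<longrightarrow> c = t \<longrightarrow> ((c = hd N1 \<or> c = last N1) \<and> 3 \<le> length N1)"
    proof (intro allI impI)
      fix c assume cc: "c = hd Q \<or> c = last Q" "c = t"
      then have "c = hd P \<or> c = last P" using endsQ by blast
      then show "(c = hd N1 \<or> c = last N1) \<and> 3 \<le> length N1" using h1 tz cc(2) by auto
    qed
  qed (use mk tz h1 setP in auto)
qed

end


lemma take_nth_nth_drop: "Suc i < length P \<Longrightarrow> P = take i P @ P!i # P!Suc i # drop (Suc (Suc i)) P"
  by (metis Cons_nth_drop_Suc Suc_lessD append_take_drop_id)

theorem lemma3:
  fixes V :: "'a set" and E :: "'a \<Rightarrow> 'a \<Rightarrow> bool" and S :: "'a list set"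
    and Q P :: "'a list" and i :: nat and x1 v3 y1 u :: 'a
  assumes G: "simple_graph V E" and reg: "regular 6 V E"
    and can: "canonical V E S"
    and QS: "Q \<in> S" and Qpath: "path_comp E Q"
    and P_orient: "P = Q \<or> P = rev Q"
    and i: "Suc i < length P" and x1: "P ! i = x1" and v3: "P ! Suc i = v3"
    and x1_heavy: "heavy V E S x1" and v3_dang: "dangerous V E S v3"
    and y1: "path_nb E S v3 y1" "y1 \<noteq> x1"
    and uv3: "free_edge E S u v3"
    and u_nb: "\<exists>w. path_nb E S u w \<and> w \<in> V2 V E S"
  shows "u \<in> set P \<and>
    (\<exists>j. Suc (Suc i) < j \<and> Suc j < length P \<and> P ! Suc (Suc i) = y1 \<and> P ! j = u \<and>
       {w. path_nb E S u w \<and> w \<in> V2 V E S} = {P ! Suc j} \<and>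
       {w. balanced V E S (P ! Suc j) w} = {last P}) \<and>
    {w. balanced V E S y1 w \<and> path_end E S w} = {last P} \<and>
    (\<forall>w. balanced V E S y1 w \<and> w \<noteq> last P \<longrightarrow> in_cycle_comp E S w)"
proof -
  interpret ctxP V E S Q P
    by unfold_locales (use G can QS Qpath P_orient in auto)
  have dP: "distinct P" "set P \<subseteq> V" using pP by (auto simp: is_path_iff)
  define pre where "pre = take i P"
  define post where "post = drop (Suc (Suc i)) P"
  have Pdec: "P = pre @ x1 # v3 # post" using take_nth_nth_drop[OF i] x1 v3 unfolding pre_def post_def by simp
  have lpre: "length pre = i" using i unfolding pre_def by simp
  have x1V2: "x1 \<in> V2 V E S" using x1_heavy unfolding heavy_def by blast
  have x1nV1: "x1 \<notin> V1 E S" using V2_notV1[OF x1V2] .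
  have pre_ne: "pre \<noteq> []"
  proof
    assume "pre = []"
    then have "x1 = hd P" using Pdec by simp
    then show False using x1nV1 V1P[of x1] Pdec by simp
  qed
  have v3V3: "v3 \<in> V3 V E S" using v3_dang unfolding dangerous_def by blast
  have v3nV1: "v3 \<notin> V1 E S" and v3nV2: "v3 \<notin> V2 V E S" and v3V: "v3 \<in> V"
    using v3V3 unfolding V3_def by blast+
  have post_ne: "post \<noteq> []"
  proof
    assume "post = []"
    then have "v3 = last P" using Pdec by simp
    then show False using v3nV1 V1P[of v3] Pdec by simp
  qed
  have v3P: "v3 \<in> set P" using Pdec by simp
  have nbr_v3: "nbr P v3 b \<longleftrightarrow> b = x1 \<or> b = hd post" for b
    using nbr_decomp[of "pre @ [x1]" v3 post b] dP(1) Pdec post_ne by simp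
  have "nbr P v3 y1" using pnbP[OF v3P] y1(1) by blast
  then have y1post: "y1 = hd post" using nbr_v3 y1(2) by blast
  obtain rest where post: "post = y1 # rest" using post_ne y1post by (cases post) auto
  have y1mod: "moderate V E S y1"
  proof -
    obtain a b where ab: "path_nb E S v3 a" "path_nb E S v3 b" "a \<noteq> b" "heavy V E S a" "moderate V E S b"
      using v3_dang unfolding dangerous_def by blast
    have "a = x1 \<or> a = y1" "b = x1 \<or> b = y1" using ab(1,2) pnbP[OF v3P] nbr_v3 y1post by auto
    then show ?thesis using ab heavy_mod by blast
  qed
  have y1V2: "y1 \<in> V2 V E S" using y1mod unfolding moderate_def by blast
  have y1nV1: "y1 \<notin> V1 E S" using V2_notV1[OF y1V2] .
  have rest_ne: "rest \<noteq> []"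
  proof
    assume "rest = []"
    then have "y1 = last P" using Pdec post by simp
    then show False using y1nV1 V1P[of y1] Pdec post by simp
  qed
  have Pd: "P = pre @ x1 # v3 # y1 # rest" using Pdec post by simp
  have fv3u: "free_edge E S v3 u" using free_sym[OF uv3] .
  have Evu: "E v3 u" using free_E[OF fv3u] .
  have unV1: "u \<notin> V1 E S" using fv3u v3nV1 v3nV2 v3V unfolding V2_def by blast
  define A where "A = {e. balanced V E S x1 e \<and> path_end E S e}"
  have cA: "3 \<le> card A" using x1_heavy unfolding heavy_def A_def by blast
  have Ae: "E x1 e" "path_end E S e" if "e \<in> A" for e
    using that unfolding A_def by (auto dest!: bal_free free_E)
  have pick: "\<exists>e\<in>A. e \<noteq> hd P \<and> e \<noteq> z" for z using card3_two[OF cA] by blast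
  obtain w where w: "path_nb E S u w" "w \<in> V2 V E S" using u_nb by blast
  obtain R where R: "R \<in> S" "path_comp E R" "nbr R u w" using w(1) unfolding path_nb_nbr by blast
  obtain z where z: "z \<in> V1 E S" "free_edge E S w z" using w(2) unfolding V2_def by blast
  have wR: "w \<in> set R" using nbr_set[OF R(3)] by blast
  have uR: "u \<in> set R" using nbr_set[OF R(3)] by blast
  have Ewz: "E w z" "\<not> nbr R w z" using free_R[OF R(1,2) wR] z(2) by blast+
  have zw: "z \<noteq> w" using Ein[OF Ewz(1)] by blast
  have uP: "u \<in> set P"
  proof (rule ccontr)
    assume uP: "u \<notin> set P"
    then have RQ: "R \<noteq> Q" using uR setP by blast
    have dR: "distinct R" using pp_path[OF pp R(1)] by (simp add: is_path_iff)
    obtain xs ys where Rs: "R = xs @ u # ys" using uR by (metis split_list)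
    have unhd: "u \<noteq> hd R" "u \<noteq> last R" using unV1 V1_R[OF R(1,2) uR] by blast+
    have wnb: "(xs \<noteq> [] \<and> w = last xs) \<or> (ys \<noteq> [] \<and> w = hd ys)"
      using nbr_decomp[of xs u ys w] dR Rs R(3) by simp
    obtain R' ra rb where R': "R' = R \<or> R' = rev R" "R' = ra @ u # w # rb" "ra \<noteq> []"
    proof (cases "ys \<noteq> [] \<and> w = hd ys")
      case True
      have "xs \<noteq> []" using unhd Rs by auto
      then show ?thesis using that[of R xs "tl ys"] True Rs by (cases ys) auto
    next
      case False
      then have xw: "xs \<noteq> [] \<and> w = last xs" using wnb by blast
      have "ys \<noteq> []" using unhd Rs by auto
      moreover have "rev R = rev ys @ u # w # rev (butlast xs)"
      proof -
        have "xs = butlast xs @ [w]" using xw by simp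
        then have "R = butlast xs @ w # u # ys" using Rs by (metis append.assoc append_Cons append_Nil)
        then show ?thesis by simp
      qed
      ultimately show ?thesis using that[of "rev R" "rev ys" "rev (butlast xs)"] by auto
    qed
    have nR': "\<not> nbr R' w z" using Ewz(2) R'(1) by (auto simp: nbr_rev)
    obtain e where e: "e \<in> A" "e \<noteq> hd P" "e \<noteq> z" using pick by blast
    from classify[OF Ae(2)[OF e(1)]] e(2)
    consider "e = last P" | Re Re' where "Re \<in> S" "path_comp E Re" "Re \<noteq> Q" "Re' = Re \<or> Re' = rev Re" "hd Re' = e"
      by blast
    then show False
    proof cases
      case 1
      then show False using C1b[OF Pdec pre_ne post_ne R(1,2) RQ R'(1) R'(2,3) Evu Ewz(1) z(1) zw nR'] Ae(1)[OF e(1)] e(3) by blast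
    next
      case (2 Re Re')
      show False
      proof (cases "Re = R")
        case False
        show False using C1a[OF Pdec pre_ne post_ne R(1,2) RQ R'(1) R'(2,3) Evu Ewz(1) z(1) zw nR' Ae(1)[OF e(1)] e(3) 2(1-3) False 2(4,5)] .
      next
        case True
        then have "e = hd R' \<or> e = last R'" using 2(4,5) ends_or[OF R'(1)] ends_or[OF 2(4)] by (auto simp: hd_rev)
        then show False
        proof
          assume "e = hd R'"
          then show False using C1c[OF Pdec pre_ne post_ne R(1,2) RQ R'(1) R'(2,3) Evu Ewz(1) z(1) zw nR'] Ae(1)[OF e(1)] e(3) by blast
        next
          assume "e = last R'"
          then show False using C1d[OF Pdec pre_ne post_ne R(1,2) RQ R'(1) R'(2,3) Evu Ewz(1) z(1) zw] Ae(1)[OF e(1)] e(3) by blast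
        qed
      qed
    qed
  qed
  have nbu: "\<not> nbr P v3 u" using freeP[OF v3P] fv3u by blast
  have ux: "u \<noteq> x1" "u \<noteq> y1" using nbu nbr_v3 y1post by auto
  have uv: "u \<noteq> v3" using Ein[OF Evu] by blast
  have unP: "u \<noteq> hd P" "u \<noteq> last P" using unV1 V1P[OF uP] by blast+
  have nbrPu: "nbr P u b \<longleftrightarrow> path_nb E S u b" for b using pnbP[OF uP] by simp
  have nPuw: "nbr P u w" using nbrPu w(1) by blast
  have wP: "w \<in> set P" using nbr_set[OF nPuw] by blast
  have EwzP: "E w z" "\<not> nbr P w z" using freeP[OF wP] z(2) by blast+
  have notpre: "u \<notin> set pre"
  proof
    assume "u \<in> set pre"
    then obtain q1 q2 where q: "pre = q1 @ u # q2" by (metis split_list)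
    have q1ne: "q1 \<noteq> []" using unP q Pd by auto
    define qx where "qx = q2 @ [x1]"
    have qxne: "qx \<noteq> []" "last qx = x1" unfolding qx_def by auto
    have Pq: "P = q1 @ u # qx @ v3 # post" using Pdec q unfolding qx_def by simp
    have "(q1 \<noteq> [] \<and> w = last q1) \<or> (qx @ v3 # post \<noteq> [] \<and> w = hd (qx @ v3 # post))"
      using nbr_decomp[of q1 u "qx @ v3 # post" w] dP(1) Pq nPuw by simp
    then have wc: "w = last q1 \<or> w = hd qx" using qxne by auto
    then show False
    proof
      assume wq: "w = hd qx"
      obtain e where e: "e \<in> A" "e \<noteq> hd P" "e \<noteq> z" using pick by blast
      from classify[OF Ae(2)[OF e(1)]] e(2)
      consider "e = last P" | Re Re' where "Re \<in> S" "path_comp E Re" "Re \<noteq> Q" "Re' = Re \<or> Re' = rev Re" "hd Re' = e"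
        by blast
      then show False
      proof cases
        case 1
        show False using C2b_plus_o2[OF Pq q1ne qxne(1) post_ne Evu] EwzP(1) z(1) zw wq Ae(1)[OF e(1)] e(3) 1 qxne(2) by blast
      next
        case (2 Re Re')
        show False using C2b_plus_ext[OF Pq q1ne qxne(1) post_ne Evu _ z(1) _ 2] EwzP(1) zw wq Ae(1)[OF e(1)] e(3) qxne(2) by blast
      qed
    next
      assume wq: "w = last q1"
      show False
      proof (cases "\<exists>e\<in>A. e \<noteq> hd P \<and> e \<noteq> z \<and> e \<noteq> last P")
        case True
        then obtain e where e: "e \<in> A" "e \<noteq> hd P" "e \<noteq> z" "e \<noteq> last P" by blast
        from classify[OF Ae(2)[OF e(1)]] e(2,4)
        obtain Re Re' where Re: "Re \<in> S" "path_comp E Re" "Re \<noteq> Q" "Re' = Re \<or> Re' = rev Re" "hd Re' = e"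
          by blast
        show False using C2b_minus_ext[OF Pq q1ne qxne(1) post_ne Evu _ z(1) _ _ Re] EwzP zw wq Ae(1)[OF e(1)] e(3) qxne(2) by blast
      next
        case False
        then have "A \<subseteq> {hd P, z, last P}" by blast
        from card3_sub[OF cA this] have zA: "z \<in> A" "last P \<in> A" "z \<noteq> hd P" "z \<noteq> last P" by blast+
        from classify[OF Ae(2)[OF zA(1)]] zA(3,4)
        obtain Rz Rz' where Rz: "Rz \<in> S" "path_comp E Rz" "Rz \<noteq> Q" "Rz' = Rz \<or> Rz' = rev Rz" "hd Rz' = z"
          by blast
        show False using C2b_minus_cyc[OF Pq q1ne qxne(1) post_ne Evu _ Rz] EwzP(1) wq Ae(1)[OF zA(2)] qxne(2) by blast
      qed
    qed
  qed
  have "u \<in> set rest" using uP Pd notpre ux uv by auto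
  then obtain m1 m2 where rm: "rest = m1 @ u # m2" by (metis split_list)
  define mid where "mid = y1 # m1"
  have midne: "mid \<noteq> []" "hd mid = y1" unfolding mid_def by auto
  have Pm: "P = pre @ x1 # v3 # mid @ u # m2" using Pd rm unfolding mid_def by simp
  have m2ne: "m2 \<noteq> []" using unP Pm by auto
  have lmid: "last mid \<notin> V2 V E S"
  proof
    assume "last mid \<in> V2 V E S"
    then obtain z' where z': "z' \<in> V1 E S" "free_edge E S (last mid) z'" unfolding V2_def by blast
    have lP: "last mid \<in> set P" using Pm midne by simp
    have Ez': "E (last mid) z'" using freeP[OF lP] z'(2) by blast
    have z'n: "z' \<noteq> last mid" using Ein[OF Ez'] by blast
    obtain e where e: "e \<in> A" "e \<noteq> hd P" "e \<noteq> z'" using pick by blast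
    from classify[OF Ae(2)[OF e(1)]] e(2)
    consider "e = last P" | Re Re' where "Re \<in> S" "path_comp E Re" "Re \<noteq> Q" "Re' = Re \<or> Re' = rev Re" "hd Re' = e"
      by blast
    then show False
    proof cases
      case 1
      show False using C2a_o2[OF Pm pre_ne midne(1) m2ne Evu Ez' z'(1) z'n] Ae(1)[OF e(1)] e(3) 1 by blast
    next
      case (2 Re Re')
      show False using C2a_ext[OF Pm pre_ne midne(1) m2ne Evu Ez' z'(1) z'n 2 Ae(1)[OF e(1)] e(3)] .
    qed
  qed
  have nbu2: "nbr P u b \<longleftrightarrow> b = last mid \<or> b = hd m2" for b
    using nbr_decomp[of "pre @ x1 # v3 # mid" u m2 b] dP(1) Pm m2ne midne by simp
  have whd: "w = hd m2" using nbu2[of w] nPuw w(2) lmid by auto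
  define x2 where "x2 = w"
  obtain m3 where m3: "m2 = x2 # m3" using m2ne whd unfolding x2_def by (cases m2) auto
  have PF: "P = pre @ x1 # v3 # mid @ u # x2 # m3" using Pm m3 by simp
  have x2V2: "x2 \<in> V2 V E S" using w(2) unfolding x2_def .
  have x2nV1: "x2 \<notin> V1 E S" using V2_notV1[OF x2V2] .
  have x2P: "x2 \<in> set P" using PF by simp
  have pnu: "path_nb E S u b \<longleftrightarrow> b = last mid \<or> b = x2" for b using nbrPu[of b] nbu2[of b] m3 by simp
  have nbset: "{b. path_nb E S u b \<and> b \<in> V2 V E S} = {x2}"
    unfolding pnu using lmid x2V2 by blast
  have y1P: "y1 \<in> set P" using Pd by simp
  have baly: "E y1 t \<and> t \<in> V1 E S \<and> t \<noteq> y1" if "balanced V E S y1 t" for t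
    using that bal_V1[OF _ y1V2] bal_free free_E Ein by blast
  have c2y: "2 \<le> card {t. balanced V E S y1 t}" using y1mod unfolding moderate_def by blast
  have C4all: "f = last P" if f: "balanced V E S y1 f" "path_end E S f" for f
  proof (rule ccontr)
    assume fn: "f \<noteq> last P"
    have Eyf: "E y1 f" using baly[OF f(1)] by blast
    from classify[OF f(2)] fn
    consider "f = hd P" | Rf Rf' where "Rf \<in> S" "path_comp E Rf" "Rf \<noteq> Q" "Rf' = Rf \<or> Rf' = rev Rf" "hd Rf' = f"
      by blast
    then show False
    proof cases
      case (2 Rf Rf')
      show False
      proof (cases "E x2 f")
        case True
        obtain t where t: "t \<in> {t. balanced V E S y1 t}" "t \<noteq> f" using card2_one[OF c2y] by blast
        show False using C4_extA[OF PF pre_ne midne(1) Evu True _ _ _ _ 2] baly t midne(2) by auto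
      next
        case False
        obtain z2 where z2: "z2 \<in> V1 E S" "free_edge E S x2 z2" using x2V2 unfolding V2_def by blast
        have Ez2: "E x2 z2" "\<not> nbr P x2 z2" using freeP[OF x2P] z2(2) by blast+
        have "z2 \<noteq> x2" using Ein[OF Ez2(1)] by blast
        moreover have "z2 \<noteq> f" using False Ez2(1) by blast
        ultimately show False using C4_extB[OF PF pre_ne midne(1) Evu _ Ez2(1) z2(1) _ _ Ez2(2) 2] Eyf midne(2) by blast
      qed
    next
      case 1
      then have Eyo: "E (hd mid) (hd P)" using Eyf midne(2) by simp
      show False
      proof (cases "E x2 (hd P)")
        case True
        obtain t where t: "t \<in> {t. balanced V E S y1 t}" "t \<noteq> hd P" using card2_one[OF c2y] by blast
        show False using C4_o1A[OF PF pre_ne midne(1) Evu Eyo True] baly t midne(2) by auto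
      next
        case False
        obtain z2 where z2: "z2 \<in> V1 E S" "free_edge E S x2 z2" using x2V2 unfolding V2_def by blast
        have Ez2: "E x2 z2" "\<not> nbr P x2 z2" using freeP[OF x2P] z2(2) by blast+
        have z2x: "z2 \<noteq> x2" using Ein[OF Ez2(1)] by blast
        have z2o: "z2 \<noteq> hd P" using False Ez2(1) by blast
        obtain e where e: "e \<in> A" "e \<noteq> hd P" "e \<noteq> z2" using pick by blast
        from classify[OF Ae(2)[OF e(1)]] e(2)
        consider "e = last P" | Re Re' where "Re \<in> S" "path_comp E Re" "Re \<noteq> Q" "Re' = Re \<or> Re' = rev Re" "hd Re' = e"
          by blast
        then show False
        proof cases
          case 1
          show False using C4_o1B_o2[OF PF pre_ne midne(1) Evu Eyo _ Ez2(1) z2(1) z2x z2o] Ae(1)[OF e(1)] e(3) 1 by blast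
        next
          case (2 Re Re')
          show False using C4_o1B_ext[OF PF pre_ne midne(1) Evu Eyo Ez2(1) z2(1) z2x z2o e(3)[symmetric] Ez2(2) 2 Ae(1)[OF e(1)]] .
        qed
      qed
    qed
  qed
  have ybal: "{w. balanced V E S y1 w \<and> path_end E S w} = {last P}"
  proof
    show "{w. balanced V E S y1 w \<and> path_end E S w} \<subseteq> {last P}" using C4all by blast
    obtain b where "balanced V E S y1 b" "path_end E S b" using y1mod unfolding moderate_def by blast
    then show "{last P} \<subseteq> {w. balanced V E S y1 w \<and> path_end E S w}" using C4all by auto
  qed
  have ycyc: "\<forall>w. balanced V E S y1 w \<and> w \<noteq> last P \<longrightarrow> in_cycle_comp E S w"
  proof (intro allI impI)
    fix b assume b: "balanced V E S y1 b \<and> b \<noteq> last P"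
    then have "b \<in> V1 E S" using baly by blast
    then have "path_end E S b \<or> in_cycle_comp E S b" unfolding V1_def by blast
    then show "in_cycle_comp E S b" using b C4all by blast
  qed
  have Eyo2: "E (hd mid) (last P)" using ybal baly midne(2) by blast
  have x2bal: "{b. balanced V E S x2 b} = {last P}"
  proof -
    have sub: "t = last P" if t: "balanced V E S x2 t" for t
    proof (rule ccontr)
      assume "t \<noteq> last P"
      moreover have "E x2 t" "t \<in> V1 E S" "t \<noteq> x2" using t bal_V1[OF _ x2V2] bal_free free_E Ein by blast+
      ultimately show False using C3[OF PF pre_ne midne(1) Evu Eyo2] by blast
    qed
    obtain z2 where z2: "z2 \<in> V1 E S" "free_edge E S x2 z2" using x2V2 unfolding V2_def by blast
    have "balanced V E S x2 z2" unfolding balanced_def using z2 x2V2 by blast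
    then show ?thesis using sub by auto
  qed
  define j where "j = length pre + 3 + length m1"
  have PJ: "P = (pre @ [x1, v3, y1] @ m1) @ u # x2 # m3" using PF unfolding mid_def by simp
  have lenP: "length P = length pre + 5 + length m1 + length m3" using PJ by simp
  have Pj: "P ! j = u" unfolding j_def by (subst PJ) (simp add: nth_append)
  have Pj1: "P ! Suc j = x2" unfolding j_def by (subst PJ) (simp add: nth_append)
  have Pi2: "P ! Suc (Suc i) = y1" using Pd lpre by (simp add: nth_append)
  show ?thesis
  proof (intro conjI)
    show "u \<in> set P" by (rule uP)
    show "\<exists>j. Suc (Suc i) < j \<and> Suc j < length P \<and> P ! Suc (Suc i) = y1 \<and> P ! j = u \<and>
       {w. path_nb E S u w \<and> w \<in> V2 V E S} = {P ! Suc j} \<and>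
       {w. balanced V E S (P ! Suc j) w} = {last P}"
      using Pj Pj1 Pi2 nbset x2bal lenP lpre unfolding j_def by (intro exI[of _ j]) (auto simp: j_def)
    show "{w. balanced V E S y1 w \<and> path_end E S w} = {last P}" by (rule ybal)
    show "\<forall>w. balanced V E S y1 w \<and> w \<noteq> last P \<longrightarrow> in_cycle_comp E S w" by (rule ycyc)
  qed
qed



end
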